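(* Let $H=(Q,\pi,f_0,f_1)$ satisfy Assumptions A1 and A2 and assume that the distribution function of $(f_1/f_0)(X_1)$ is continuous and strictly increasing. Then the function $m(\lambda)=E[\ell_i^\infty(X)\mid\ell_i^\infty(X)<\lambda]$ is continuous and strictly increasing on $(0,1)$, and $m(\lambda)<\lambda$ for all $\lambda\in(0,1)$.
   Context: Two-state HMM: $\mu$ Lebesgue on $\mathbb R$ or counting on $\mathbb Z$; under $\Pi_H$, $(\theta_n)$ is a Markov chain on $\{0,1\}$ with transition matrix $Q$ and initial law $\pi$, and given $\theta$ the $X_n$ are independent with $\mu$-densities $f_{\theta_n}$. Assumption A1: (i) some $\nu>0$ has $\max_jE_{X\sim f_j}|X|^\nu<\infty$; (ii) some $x^*\in\mathbb R\cup\{\pm\infty\}$ has $f_1/f_0\to\infty$ as $x\uparrow x^*$ or as $x\downarrow x^*$ (conventions $1/0=\infty,0/0=0$). Assumption A2: $Q$ has distinct rows, $\min_{ij}Q_{ij}>0$, and $\pi$ is invariant for $Q$. $\ell_i^\infty(X)=\Pi_H(\theta_i=0\mid(X_n)_{n\in\mathbb Z})$ for the bi-infinite stationary HMM $(X_n,\theta_n)_{n\in\mathbb Z}$; by stationarity $m$ does not depend on $i$. *)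

theory Defs
  imports "HOL-Probability.Probability"
begin

definition int_counting :: "real measure" where
  "int_counting = distr (count_space UNIV) borel real_of_int"

definition ref_measure :: "real measure \<Rightarrow> real set \<Rightarrow> bool" where
  "ref_measure \<mu> D \<longleftrightarrow> (\<mu> = lborel \<and> D = UNIV) \<or> (\<mu> = int_counting \<and> D = \<int>)"

definition densities :: "real measure \<Rightarrow> (nat \<Rightarrow> real \<Rightarrow> real) \<Rightarrow> bool" where
  "densities \<mu> f \<longleftrightarrow> (\<forall>j\<in>{0,1}. f j \<in> borel_measurable borel \<and> (\<forall>x. f j x \<ge> 0)
      \<and> (\<integral>\<^sup>+x. ennreal (f j x) \<partial>\<mu>) = 1)"

definition lr :: "(nat \<Rightarrow> real \<Rightarrow> real) \<Rightarrow> real \<Rightarrow> ereal" where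
  "lr f x = (if f 0 x = 0 then (if f 1 x = 0 then 0 else \<infinity>) else ereal (f 1 x / f 0 x))"

definition A1 :: "real measure \<Rightarrow> real set \<Rightarrow> (nat \<Rightarrow> real \<Rightarrow> real) \<Rightarrow> bool" where
  "A1 \<mu> D f \<longleftrightarrow>
     (\<exists>\<nu>>0. \<forall>j\<in>{0,1}. (\<integral>\<^sup>+x. ennreal (\<bar>x\<bar> powr \<nu> * f j x) \<partial>\<mu>) < \<infinity>) \<and>
     (\<exists>F. (F = at_top \<or> F = at_bot \<or> (\<exists>c. F = at_left c \<or> F = at_right c)) \<and>
          inf F (principal D) \<noteq> bot \<and>
          ((\<lambda>x. lr f x) \<longlongrightarrow> \<infinity>) (inf F (principal D)))"

definition A2 :: "(nat \<Rightarrow> nat \<Rightarrow> real) \<Rightarrow> (nat \<Rightarrow> real) \<Rightarrow> bool" where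
  "A2 Q \<pi> \<longleftrightarrow>
     (\<forall>i\<in>{0,1}. Q i 0 + Q i 1 = 1) \<and>
     (\<forall>i\<in>{0,1}. \<forall>j\<in>{0,1}. Q i j > 0) \<and>
     (Q 0 0, Q 0 1) \<noteq> (Q 1 0, Q 1 1) \<and>
     \<pi> 0 \<ge> 0 \<and> \<pi> 1 \<ge> 0 \<and> \<pi> 0 + \<pi> 1 = 1 \<and>
     (\<forall>j\<in>{0,1}. \<pi> j = \<pi> 0 * Q 0 j + \<pi> 1 * Q 1 j)"

text \<open>(theta_n, X_n)_{n in Z} on the probability space M is the bi-infinite stationary HMM:
all finite-window joint laws are those of the HMM with parameters (Q, pi, f_0, f_1).\<close>
definition stationary_hmm ::
  "'w measure \<Rightarrow> real measure \<Rightarrow> (nat \<Rightarrow> nat \<Rightarrow> real) \<Rightarrow> (nat \<Rightarrow> real) \<Rightarrow>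
   (nat \<Rightarrow> real \<Rightarrow> real) \<Rightarrow> (int \<Rightarrow> 'w \<Rightarrow> nat) \<Rightarrow> (int \<Rightarrow> 'w \<Rightarrow> real) \<Rightarrow> bool" where
  "stationary_hmm M \<mu> Q \<pi> f \<theta> X \<longleftrightarrow>
     prob_space M \<and>
     (\<forall>n. \<theta> n \<in> measurable M (count_space UNIV)) \<and>
     (\<forall>n. X n \<in> borel_measurable M) \<and>
     (\<forall>a b (s::int \<Rightarrow> nat) (B::int \<Rightarrow> real set).
        a \<le> b \<longrightarrow> (\<forall>n\<in>{a..b}. s n \<in> {0,1} \<and> B n \<in> sets borel) \<longrightarrow>
        emeasure M {\<omega>\<in>space M. \<forall>n\<in>{a..b}. \<theta> n \<omega> = s n \<and> X n \<omega> \<in> B n}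
        = ennreal (\<pi> (s a) * (\<Prod>n\<in>{a..<b}. Q (s n) (s (n + 1))))
          * (\<Prod>n\<in>{a..b}. \<integral>\<^sup>+x\<in>B n. ennreal (f (s n) x) \<partial>\<mu>))"

definition obs_algebra :: "'w measure \<Rightarrow> (int \<Rightarrow> 'w \<Rightarrow> real) \<Rightarrow> 'w measure" where
  "obs_algebra M X = vimage_algebra (space M) (\<lambda>\<omega> n. X n \<omega>) (Pi\<^sub>M UNIV (\<lambda>_. borel))"

definition ell_inf :: "'w measure \<Rightarrow> (int \<Rightarrow> 'w \<Rightarrow> nat) \<Rightarrow> (int \<Rightarrow> 'w \<Rightarrow> real) \<Rightarrow> int \<Rightarrow> 'w \<Rightarrow> real" where
  "ell_inf M \<theta> X i = real_cond_exp M (obs_algebra M X)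
      (indicator {\<omega>\<in>space M. \<theta> i \<omega> = 0})"

definition cond_mean_below :: "'w measure \<Rightarrow> ('w \<Rightarrow> real) \<Rightarrow> real \<Rightarrow> real" where
  "cond_mean_below M L t =
     (\<integral>\<omega>. L \<omega> * indicator {\<omega>\<in>space M. L \<omega> < t} \<omega> \<partial>M)
       / measure M {\<omega>\<in>space M. L \<omega> < t}"

definition lr_cdf :: "'w measure \<Rightarrow> (nat \<Rightarrow> real \<Rightarrow> real) \<Rightarrow> (int \<Rightarrow> 'w \<Rightarrow> real) \<Rightarrow> real \<Rightarrow> real" where
  "lr_cdf M f X t = measure M {\<omega>\<in>space M. lr f (X 1 \<omega>) \<le> ereal t}"

end

theory Submission
  imports Defs
begin

lemma abstract_m:
  fixes M :: "'w measure" and Y :: "'w \<Rightarrow> real"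
  assumes P: "prob_space M" and Ym[measurable]: "Y \<in> borel_measurable M"
    and Y01: "\<And>x. x \<in> space M \<Longrightarrow> 0 \<le> Y x \<and> Y x \<le> 1"
    and atom: "\<And>t. t \<in> {0<..<1} \<Longrightarrow> measure M {x\<in>space M. Y x = t} = 0"
    and pos: "\<And>a b. 0 < a \<Longrightarrow> a < b \<Longrightarrow> b < 1 \<Longrightarrow> measure M {x\<in>space M. a < Y x \<and> Y x < b} > 0"
  shows "continuous_on {0<..<1} (cond_mean_below M Y)
    \<and> strict_mono_on {0<..<1} (cond_mean_below M Y)
    \<and> (\<forall>t\<in>{0<..<1}. cond_mean_below M Y t < t)"
proof -
  interpret prob_space M by fact
  have [simp]: "{x\<in>space M. Y x < t} \<in> sets M" "{x\<in>space M. Y x = t} \<in> sets M"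
    "{x\<in>space M. Y x \<le> t} \<in> sets M" "{x\<in>space M. s \<le> Y x \<and> Y x < t} \<in> sets M" for s t
    by measurable
  have bint: "integrable M (\<lambda>x. h x * indicator S x)" if "S \<in> sets M" "h \<in> borel_measurable M"
    "\<And>x. x\<in>space M \<Longrightarrow> \<bar>h x\<bar> \<le> 2" for h :: "'w \<Rightarrow> real" and S
    by (rule integrable_const_bound[where B=2]) (use that in \<open>auto simp: indicator_def\<close>)
  define D where "D t = measure M {x\<in>space M. Y x < t}" for t
  define N where "N t = (\<integral>x. Y x * indicator {x\<in>space M. Y x < t} x \<partial>M)" for t
  have m_eq: "cond_mean_below M Y t = N t / D t" for t
    unfolding cond_mean_below_def N_def D_def by simp
  have intN: "integrable M (\<lambda>x. Y x * indicator {x\<in>space M. Y x < t} x)" for t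
    by (rule integrable_const_bound[where B=1]) (auto simp: Y01 indicator_def)
  have Dpos: "D t > 0" if "t \<in> {0<..<1}" for t
  proof -
    have "0 < measure M {x\<in>space M. t/2 < Y x \<and> Y x < t}" using that by (intro pos) auto
    also have "\<dots> \<le> D t" unfolding D_def by (intro finite_measure_mono) auto
    finally show ?thesis .
  qed
  have key: "t * D t - N t \<ge> (t/2) * D (t/2)" if "t \<in> {0<..<1}" for t
  proof -
    have "t * D t - N t = (\<integral>x. (t - Y x) * indicator {x\<in>space M. Y x < t} x \<partial>M)"
      unfolding D_def N_def using intN[of t]
      by (simp add: left_diff_distrib Bochner_Integration.integral_diff[OF integrable_real_mult_indicator])
    also have "\<dots> \<ge> (\<integral>x. (t/2) * indicator {x\<in>space M. Y x < t/2} x \<partial>M)"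
      by (rule integral_mono; (rule bint; (simp; fail)?; (measurable; fail)?; use that in \<open>fastforce simp: abs_le_iff dest: Y01\<close>)?; use Y01 that in \<open>auto simp: indicator_def\<close>)
    moreover have "(\<integral>x. (t/2) * indicator {x\<in>space M. Y x < t/2} x \<partial>M) = (t/2) * D (t/2)"
      unfolding D_def by simp
    ultimately show ?thesis using that by (auto simp: D_def)
  qed
  have less: "N t < t * D t" if "t \<in> {0<..<1}" for t
  proof -
    have "(t/2) * D (t/2) > 0" using that Dpos[of "t/2"] by auto
    with key[OF that] show ?thesis by simp
  qed
  have part3: "\<forall>t\<in>{0<..<1}. cond_mean_below M Y t < t"
    using less Dpos by (auto simp: m_eq divide_less_eq)
  have part2: "strict_mono_on {0<..<1} (cond_mean_below M Y)"
  proof (rule strict_mono_onI)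
    fix s t :: real assume s: "s \<in> {0<..<1}" and t: "t \<in> {0<..<1}" and st: "s < t"
    define Del where "Del = measure M {x\<in>space M. s \<le> Y x \<and> Y x < t}"
    define E where "E = (\<integral>x. Y x * indicator {x\<in>space M. s \<le> Y x \<and> Y x < t} x \<partial>M)"
    have "0 < measure M {x\<in>space M. s < Y x \<and> Y x < t}" using s t st by (intro pos) auto
    also have "\<dots> \<le> Del" unfolding Del_def by (intro finite_measure_mono) auto
    finally have Delpos: "Del > 0" .
    have Dt: "D t = D s + Del"
    proof -
      have "{x\<in>space M. Y x < t} = {x\<in>space M. Y x < s} \<union> {x\<in>space M. s \<le> Y x \<and> Y x < t}"
        using st by auto
      then show ?thesis unfolding D_def Del_def
        by (simp, subst finite_measure_Union) auto
    qed
    have Nt: "N t = N s + E"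
    proof -
      have "(\<lambda>x. Y x * indicator {x\<in>space M. Y x < t} x) = (\<lambda>x. Y x * indicator {x\<in>space M. Y x < s} x + Y x * indicator {x\<in>space M. s \<le> Y x \<and> Y x < t} x)"
        using st by (auto simp: indicator_def fun_eq_iff)
      then show ?thesis unfolding N_def E_def
        by (simp add: Bochner_Integration.integral_add intN integrable_const_bound[where B=1] indicator_def Y01)
    qed
    have "E \<ge> (\<integral>x. s * indicator {x\<in>space M. s \<le> Y x \<and> Y x < t} x \<partial>M)"
      unfolding E_def
      by (rule integral_mono; (rule bint; (simp; fail)?; (measurable; fail)?; use s t in \<open>fastforce simp: abs_le_iff dest: Y01\<close>)?; use Y01 s t in \<open>auto simp: indicator_def\<close>)
    then have EDel: "E \<ge> s * Del" unfolding Del_def by simp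
    have Ds: "D s > 0" using Dpos s by auto
    have Ns: "N s < s * D s" using less s by auto
    have "D s * E \<ge> D s * (s * Del)" using EDel Ds by (intro mult_left_mono) auto
    moreover have "N s * Del < s * D s * Del" using Ns Delpos by (intro mult_strict_right_mono) auto
    ultimately have "N s * (D s + Del) < (N s + E) * D s" by (simp add: algebra_simps)
    then show "cond_mean_below M Y s < cond_mean_below M Y t"
      unfolding m_eq Nt Dt using Ds Delpos by (simp add: divide_less_eq less_divide_eq mult.commute)
  qed
  have part1: "continuous_on {0<..<1} (cond_mean_below M Y)"
  proof -
    interpret R: real_distribution "distr M borel Y"
      by (simp add: real_distribution_def prob_space_distr real_distribution_axioms_def)
    have DF: "D t = cdf (distr M borel Y) t" if "t \<in> {0<..<1}" for t
    proof -
      have "cdf (distr M borel Y) t = measure M {x\<in>space M. Y x \<le> t}"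
        unfolding cdf_def by (simp add: measure_distr vimage_def Int_def conj_commute)
      also have "\<dots> = measure M ({x\<in>space M. Y x < t} \<union> {x\<in>space M. Y x = t})"
        by (rule arg_cong[where f="measure M"]) auto
      also have "\<dots> = D t + measure M {x\<in>space M. Y x = t}"
        unfolding D_def by (subst finite_measure_Union) auto
      finally show ?thesis using atom[OF that] by simp
    qed
    have Dcont: "continuous_on {0<..<1} D"
    proof -
      have "continuous_on {0<..<1} (cdf (distr M borel Y))"
      proof (intro continuous_at_imp_continuous_on ballI)
        fix t :: real assume t: "t \<in> {0<..<1}"
        have "measure (distr M borel Y) {t} = measure M {x\<in>space M. Y x = t}"
          by (simp add: measure_distr vimage_def Int_def conj_commute)
        then show "isCont (cdf (distr M borel Y)) t" using R.isCont_cdf atom[OF t] by simp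
      qed
      then show ?thesis using DF by (auto intro: continuous_on_cong[THEN iffD1])
    qed
    have Nbound: "\<bar>N t - N s\<bar> \<le> \<bar>D t - D s\<bar>" for s t
    proof -
      have gen: "\<bar>N t - N s\<bar> \<le> D t - D s" if st: "s \<le> t" for s t
      proof -
        have "N t - N s = (\<integral>x. Y x * indicator {x\<in>space M. s \<le> Y x \<and> Y x < t} x \<partial>M)"
        proof -
          have "(\<lambda>x. Y x * indicator {x\<in>space M. Y x < t} x) = (\<lambda>x. Y x * indicator {x\<in>space M. Y x < s} x + Y x * indicator {x\<in>space M. s \<le> Y x \<and> Y x < t} x)"
            using st by (auto simp: indicator_def fun_eq_iff)
          then show ?thesis unfolding N_def
            by (simp add: Bochner_Integration.integral_add intN integrable_const_bound[where B=1] indicator_def Y01)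
        qed
        also have "\<bar>\<dots>\<bar> \<le> (\<integral>x. indicator {x\<in>space M. s \<le> Y x \<and> Y x < t} x \<partial>M)"
          by (rule order_trans[OF integral_abs_bound integral_mono])
             (auto intro!: integrable_const_bound[where B=1] simp: indicator_def Y01 abs_le_iff)
        also have "\<dots> = D t - D s"
        proof -
          have "{x\<in>space M. Y x < t} = {x\<in>space M. Y x < s} \<union> {x\<in>space M. s \<le> Y x \<and> Y x < t}"
            using st by auto
          then have "D t = D s + measure M {x\<in>space M. s \<le> Y x \<and> Y x < t}" unfolding D_def
            by (simp, subst finite_measure_Union) auto
          then show ?thesis by simp
        qed
        finally show ?thesis .
      qed
      show ?thesis
      proof (cases "s \<le> t")
        case True then show ?thesis using gen[OF True] by simp
      next
        case False then show ?thesis using gen[of t s] by simp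
      qed
    qed
    have Ncont: "continuous_on {0<..<1} N"
      unfolding continuous_on_def
    proof (intro ballI)
      fix t :: real assume t: "t \<in> {0<..<1}"
      have "((\<lambda>x. D x - D t) \<longlongrightarrow> 0) (at t within {0<..<1})"
        using Dcont t unfolding continuous_on_def by (simp add: LIM_zero)
      then have "((\<lambda>x. \<bar>D x - D t\<bar>) \<longlongrightarrow> 0) (at t within {0<..<1})"
        by (rule tendsto_rabs_zero)
      then have "((\<lambda>x. N x - N t) \<longlongrightarrow> 0) (at t within {0<..<1})"
        by (rule Lim_null_comparison[rotated]) (auto simp: Nbound)
      then show "(N \<longlongrightarrow> N t) (at t within {0<..<1})" by (simp add: LIM_zero_iff)
    qed
    have "continuous_on {0<..<1} (\<lambda>t. N t / D t)"
      using Ncont Dcont Dpos by (intro continuous_intros) (auto, fastforce)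
    then show ?thesis by (simp add: m_eq[abs_def])
  qed
  show ?thesis using part1 part2 part3 by blast
qed

locale hmm = prob_space M
  for M :: "'w measure" +
  fixes \<mu> :: "real measure" and D :: "real set"
    and Q :: "nat \<Rightarrow> nat \<Rightarrow> real" and \<pi> :: "nat \<Rightarrow> real" and f :: "nat \<Rightarrow> real \<Rightarrow> real"
    and \<theta> :: "int \<Rightarrow> 'w \<Rightarrow> nat" and X :: "int \<Rightarrow> 'w \<Rightarrow> real"
  assumes ref: "ref_measure \<mu> D"
    and dens: "densities \<mu> f"
    and a2: "A2 Q \<pi>"
    and shmm: "stationary_hmm M \<mu> Q \<pi> f \<theta> X"
    and cont: "continuous_on UNIV (lr_cdf M f X)"
    and smono: "strict_mono_on {0..} (lr_cdf M f X)"
begin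

lemma theta_meas[measurable]: "\<theta> n \<in> measurable M (count_space UNIV)"
  using shmm unfolding stationary_hmm_def by auto

lemma X_meas[measurable]: "X n \<in> borel_measurable M"
  using shmm unfolding stationary_hmm_def by auto

lemma sets_mu[measurable_cong]: "sets \<mu> = sets borel"
  using ref unfolding ref_measure_def int_counting_def by auto

lemma f_meas[measurable]: "j \<in> {0,1} \<Longrightarrow> f j \<in> borel_measurable borel"
  using dens unfolding densities_def by auto

lemma f_meas': "j \<in> {0,1} \<Longrightarrow> f j \<in> borel_measurable \<mu>"
  using f_meas measurable_cong_sets[OF sets_mu refl] by auto

lemma f_nn: "j \<in> {0,1} \<Longrightarrow> 0 \<le> f j x"
  using dens unfolding densities_def by auto

lemma f_int: "j \<in> {0,1} \<Longrightarrow> (\<integral>\<^sup>+x. ennreal (f j x) \<partial>\<mu>) = 1"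
  using dens unfolding densities_def by auto

definition \<phi> :: "nat \<Rightarrow> real measure" where
  "\<phi> j = density \<mu> (\<lambda>x. ennreal (f j x))"

lemma sets_phi[measurable_cong]: "sets (\<phi> j) = sets borel"
  by (simp add: \<phi>_def sets_mu)

lemma space_phi[simp]: "space (\<phi> j) = UNIV"
  using sets_eq_imp_space_eq[OF sets_phi] by simp

lemma space_mu[simp]: "space \<mu> = UNIV"
  using sets_eq_imp_space_eq[OF sets_mu] by simp

lemma fe_meas: "j \<in> {0,1} \<Longrightarrow> (\<lambda>x. ennreal (f j x)) \<in> borel_measurable \<mu>"
  using measurable_compose[OF f_meas' measurable_ennreal] by blast

lemma prob_phi: "j \<in> {0,1} \<Longrightarrow> prob_space (\<phi> j)"
  unfolding \<phi>_def
  by (rule prob_spaceI) (simp add: f_meas' f_int emeasure_density[OF fe_meas])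

lemma measure_phi_UNIV[simp]: "j \<in> {0,1} \<Longrightarrow> measure (\<phi> j) UNIV = 1"
  using prob_space.prob_space[OF prob_phi] by simp

lemma emeasure_phi: "j \<in> {0,1} \<Longrightarrow> B \<in> sets borel \<Longrightarrow> emeasure (\<phi> j) B = (\<integral>\<^sup>+x\<in>B. ennreal (f j x) \<partial>\<mu>)"
  unfolding \<phi>_def
  by (subst emeasure_density) (auto simp: f_meas' sets_mu)

lemma emeasure_phi_real: "j \<in> {0,1} \<Longrightarrow> emeasure (\<phi> j) B = ennreal (measure (\<phi> j) B)"
  using prob_phi[unfolded prob_space_def] finite_measure.emeasure_eq_measure by blast

lemma a2Q: "i \<in> {0,1} \<Longrightarrow> j \<in> {0,1} \<Longrightarrow> Q i j > 0"
  using a2 unfolding A2_def by auto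

lemma pi_nn: "\<pi> 0 \<ge> 0" "\<pi> 1 \<ge> 0" "\<pi> 0 + \<pi> 1 = 1"
  using a2 unfolding A2_def by auto

lemma pi_pos: "j \<in> {0,1} \<Longrightarrow> \<pi> j > 0"
proof -
  assume j: "j \<in> {0,1}"
  have st: "\<pi> j = \<pi> 0 * Q 0 j + \<pi> 1 * Q 1 j" using a2 j unfolding A2_def by auto
  have "\<pi> 0 * Q 0 j + \<pi> 1 * Q 1 j > 0"
  proof (cases "\<pi> 0 > 0")
    case True
    have "0 \<le> \<pi> 1 * Q 1 j" using pi_nn a2Q[of 1 j] j by (intro mult_nonneg_nonneg) auto
    then show ?thesis using a2Q[of 0 j] j True by (intro add_pos_nonneg) auto
  next
    case False
    then have "\<pi> 1 = 1" "\<pi> 0 = 0" using pi_nn by auto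
    then show ?thesis using a2Q[of 1 j] j by simp
  qed
  then show ?thesis using st by simp
qed

lemma formula:
  assumes "a \<le> b" "\<And>n. n \<in> {a..b} \<Longrightarrow> s n \<in> {0,1} \<and> B n \<in> sets borel"
  shows "measure M {\<omega>\<in>space M. \<forall>n\<in>{a..b}. \<theta> n \<omega> = s n \<and> X n \<omega> \<in> B n}
    = \<pi> (s a) * (\<Prod>n\<in>{a..<b}. Q (s n) (s (n + 1))) * (\<Prod>n\<in>{a..b}. measure (\<phi> (s n)) (B n))"
proof -
  have e: "emeasure M {\<omega>\<in>space M. \<forall>n\<in>{a..b}. \<theta> n \<omega> = s n \<and> X n \<omega> \<in> B n}
        = ennreal (\<pi> (s a) * (\<Prod>n\<in>{a..<b}. Q (s n) (s (n + 1))))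
          * (\<Prod>n\<in>{a..b}. \<integral>\<^sup>+x\<in>B n. ennreal (f (s n) x) \<partial>\<mu>)"
    using shmm assms unfolding stationary_hmm_def by blast
  have "(\<Prod>n\<in>{a..b}. \<integral>\<^sup>+x\<in>B n. ennreal (f (s n) x) \<partial>\<mu>) = (\<Prod>n\<in>{a..b}. ennreal (measure (\<phi> (s n)) (B n)))"
    using assms(2) by (intro prod.cong refl) (simp add: emeasure_phi[symmetric] emeasure_phi_real)
  also have "\<dots> = ennreal (\<Prod>n\<in>{a..b}. measure (\<phi> (s n)) (B n))"
    by (rule prod_ennreal) simp
  finally have e2: "emeasure M {\<omega>\<in>space M. \<forall>n\<in>{a..b}. \<theta> n \<omega> = s n \<and> X n \<omega> \<in> B n}
     = ennreal (\<pi> (s a) * (\<Prod>n\<in>{a..<b}. Q (s n) (s (n + 1))) * (\<Prod>n\<in>{a..b}. measure (\<phi> (s n)) (B n)))"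
    using e by (simp add: ennreal_mult'' prod_nonneg)
  have nn: "0 \<le> \<pi> (s a) * (\<Prod>n\<in>{a..<b}. Q (s n) (s (n + 1))) * (\<Prod>n\<in>{a..b}. measure (\<phi> (s n)) (B n))"
  proof -
    have "s a \<in> {0,1}" using assms by auto
    then have "\<pi> (s a) \<ge> 0" using pi_nn by auto
    moreover have "(\<Prod>n\<in>{a..<b}. Q (s n) (s (n + 1))) \<ge> 0"
    proof (intro prod_nonneg ballI less_imp_le a2Q)
      fix n assume "n \<in> {a..<b}"
      then have "n \<in> {a..b}" "n + 1 \<in> {a..b}" by auto
      then show "s n \<in> {0,1}" "s (n+1) \<in> {0,1}" using assms(2) by blast+
    qed
    ultimately show ?thesis by (simp add: prod_nonneg)
  qed
  show ?thesis using e2 nn by (simp add: measure_def)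
qed

lemma theta01: "AE \<omega> in M. \<forall>n. \<theta> n \<omega> \<in> {0,1}"
proof -
  have "AE \<omega> in M. \<theta> n \<omega> \<in> {0,1}" for n
  proof -
    have m: "measure M {\<omega>\<in>space M. \<theta> n \<omega> = j} = \<pi> j" if "j \<in> {0,1}" for j
    proof -
      have "measure M {\<omega>\<in>space M. \<theta> n \<omega> = j} = measure M {\<omega>\<in>space M. \<forall>m\<in>{n..n}. \<theta> m \<omega> = (\<lambda>_. j) m \<and> X m \<omega> \<in> (\<lambda>_. UNIV) m}"
        by (rule arg_cong[where f="measure M"]) auto
      also have "\<dots> = \<pi> j"
        using that by (subst formula) auto
      finally show ?thesis .
    qed
    have "measure M {\<omega>\<in>space M. \<theta> n \<omega> \<in> {0,1}} = measure M ({\<omega>\<in>space M. \<theta> n \<omega> = 0} \<union> {\<omega>\<in>space M. \<theta> n \<omega> = 1})"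
      by (rule arg_cong[where f="measure M"]) auto
    also have "\<dots> = 1" using pi_nn(3) by (subst finite_measure_Union) (auto simp: m)
    finally have p1: "measure M {\<omega>\<in>space M. \<theta> n \<omega> \<in> {0,1}} = 1" .
    have ev: "{\<omega>\<in>space M. \<theta> n \<omega> \<in> {0,1}} \<in> events"
    proof -
      have "{\<omega>\<in>space M. \<theta> n \<omega> \<in> {0,1}} = {\<omega>\<in>space M. \<theta> n \<omega> = 0} \<union> {\<omega>\<in>space M. \<theta> n \<omega> = 1}" by auto
      also have "\<dots> \<in> events" by measurable
      finally show ?thesis .
    qed
    have "AE \<omega> in M. \<omega> \<in> {\<omega>\<in>space M. \<theta> n \<omega> \<in> {0,1}}" using prob_eq_1[OF ev] p1 by simp
    then show ?thesis by (rule eventually_mono) simp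
  qed
  then show ?thesis by (simp add: AE_all_countable)
qed

end

context hmm begin

lemma window:
  assumes ab: "a \<le> b" and B: "\<And>n. n \<in> {a..b} \<Longrightarrow> B n \<in> sets borel"
    and T: "T \<subseteq> PiE {a..b} (\<lambda>_. {0,1})" and S: "S \<in> sets M"
    and eq: "\<And>\<omega>. \<omega> \<in> space M \<Longrightarrow> (\<forall>n. \<theta> n \<omega> \<in> {0,1}) \<Longrightarrow>
       (\<omega> \<in> S \<longleftrightarrow> (restrict (\<lambda>n. \<theta> n \<omega>) {a..b} \<in> T \<and> (\<forall>n\<in>{a..b}. X n \<omega> \<in> B n)))"
  shows "measure M S = (\<Sum>s\<in>T. \<pi> (s a) * (\<Prod>n\<in>{a..<b}. Q (s n) (s (n + 1))) * (\<Prod>n\<in>{a..b}. measure (\<phi> (s n)) (B n)))"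
proof -
  define C where "C s = {\<omega>\<in>space M. \<forall>n\<in>{a..b}. \<theta> n \<omega> = s n \<and> X n \<omega> \<in> B n}" for s
  have Cm: "C s \<in> sets M" for s
    unfolding C_def
  proof (rule sets.sets_Collect_finite_All)
    fix n assume "n \<in> {a..b}"
    then have [measurable]: "B n \<in> sets borel" by (rule B)
    show "{\<omega>\<in>space M. \<theta> n \<omega> = s n \<and> X n \<omega> \<in> B n} \<in> sets M" by measurable
  qed simp
  have finT: "finite T" using T by (rule finite_subset) (intro finite_PiE; simp)
  have "measure M S = measure M (\<Union>s\<in>T. C s)"
  proof (rule measure_eq_AE)
    show "AE \<omega> in M. (\<omega> \<in> S) = (\<omega> \<in> (\<Union>s\<in>T. C s))"
      using theta01
    proof (rule eventually_mono)
      fix \<omega> assume th: "\<forall>n. \<theta> n \<omega> \<in> {0,1}"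
      show "(\<omega> \<in> S) = (\<omega> \<in> (\<Union>s\<in>T. C s))"
      proof (cases "\<omega> \<in> space M")
        case True
        have "(\<omega> \<in> (\<Union>s\<in>T. C s)) \<longleftrightarrow> (restrict (\<lambda>n. \<theta> n \<omega>) {a..b} \<in> T \<and> (\<forall>n\<in>{a..b}. X n \<omega> \<in> B n))"
        proof
          assume "\<omega> \<in> (\<Union>s\<in>T. C s)"
          then obtain s where s: "s \<in> T" "\<omega> \<in> C s" by auto
          have "restrict (\<lambda>n. \<theta> n \<omega>) {a..b} = s"
            using s T unfolding C_def by (auto simp: fun_eq_iff PiE_def extensional_def)
          then show "restrict (\<lambda>n. \<theta> n \<omega>) {a..b} \<in> T \<and> (\<forall>n\<in>{a..b}. X n \<omega> \<in> B n)"
            using s unfolding C_def by auto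
        next
          assume "restrict (\<lambda>n. \<theta> n \<omega>) {a..b} \<in> T \<and> (\<forall>n\<in>{a..b}. X n \<omega> \<in> B n)"
          then show "\<omega> \<in> (\<Union>s\<in>T. C s)" using True unfolding C_def
            by (intro UN_I[of "restrict (\<lambda>n. \<theta> n \<omega>) {a..b}"]) auto
        qed
        then show ?thesis using eq[OF True th] by simp
      next
        case False then show ?thesis using S sets.sets_into_space[OF S] Cm sets.sets_into_space[OF Cm] by blast
      qed
    qed
  qed (fact S, intro sets.finite_UN finT Cm)
  also have "\<dots> = (\<Sum>s\<in>T. measure M (C s))"
  proof (rule finite_measure_finite_Union[OF finT])
    show "C ` T \<subseteq> sets M" using Cm by auto
    show "disjoint_family_on C T"
      unfolding disjoint_family_on_def
    proof (intro ballI impI)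
      fix s s' assume ss: "s \<in> T" "s' \<in> T" "s \<noteq> s'"
      have e1: "s \<in> extensional {a..b}" "s' \<in> extensional {a..b}" using ss T by (meson PiE_iff subsetD)+
      have "\<exists>n\<in>{a..b}. s n \<noteq> s' n"
      proof (rule ccontr)
        assume "\<not> (\<exists>n\<in>{a..b}. s n \<noteq> s' n)"
        then have "s = s'" using extensionalityI[OF e1] by blast
        with ss(3) show False by simp
      qed
      then obtain n where n: "n \<in> {a..b}" "s n \<noteq> s' n" by blast
      show "C s \<inter> C s' = {}"
      proof (rule equals0I)
        fix \<omega> assume "\<omega> \<in> C s \<inter> C s'"
        then have "\<theta> n \<omega> = s n" "\<theta> n \<omega> = s' n" using n(1) unfolding C_def by blast+
        with n(2) show False by simp
      qed
    qed
  qed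
  also have "\<dots> = (\<Sum>s\<in>T. \<pi> (s a) * (\<Prod>n\<in>{a..<b}. Q (s n) (s (n + 1))) * (\<Prod>n\<in>{a..b}. measure (\<phi> (s n)) (B n)))"
  proof (rule sum.cong[OF refl])
    fix s assume "s \<in> T"
    then have "\<And>n. n \<in> {a..b} \<Longrightarrow> s n \<in> {0,1}" using T by (meson PiE_mem subsetD)
    then show "measure M (C s) = \<pi> (s a) * (\<Prod>n\<in>{a..<b}. Q (s n) (s (n + 1))) * (\<Prod>n\<in>{a..b}. measure (\<phi> (s n)) (B n))"
      unfolding C_def using ab B by (intro formula) auto
  qed
  finally show ?thesis .
qed

end

context hmm begin

abbreviation PS :: "(int \<Rightarrow> real) measure" where
  "PS \<equiv> Pi\<^sub>M UNIV (\<lambda>_. borel)"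

definition W :: "int \<Rightarrow> 'w \<Rightarrow> int \<Rightarrow> real" where
  "W i \<omega> = (\<lambda>n. if n = i then 0 else X n \<omega>)"

lemma W_meas[measurable]: "W i \<in> measurable M PS"
  unfolding W_def[abs_def]
proof (rule measurable_PiM_single')
  fix n :: int
  show "(\<lambda>\<omega>. if n = i then 0 else X n \<omega>) \<in> borel_measurable M" by (cases "n = i") auto
qed (auto simp: space_PiM)

lemma space_PS[simp]: "space PS = UNIV"
  by (simp add: space_PiM)

definition \<kappa> :: "int \<Rightarrow> 'w set \<Rightarrow> (int \<Rightarrow> real) measure" where
  "\<kappa> i S = distr (density M (indicator S)) PS (W i)"

lemma sets_kappa[simp, measurable_cong]: "sets (\<kappa> i S) = sets PS"
  by (simp add: \<kappa>_def)

lemma space_kappa[simp]: "space (\<kappa> i S) = UNIV"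
  using sets_eq_imp_space_eq[OF sets_kappa] by simp

lemma UNIV_PS[simp]: "UNIV \<in> sets PS"
  using sets.top[of PS] by simp

lemma emeasure_kappa:
  assumes "S \<in> sets M" "A \<in> sets PS"
  shows "emeasure (\<kappa> i S) A = ennreal (measure M (S \<inter> (W i -` A \<inter> space M)))"
proof -
  have "emeasure (\<kappa> i S) A = emeasure (density M (indicator S)) (W i -` A \<inter> space M)"
    unfolding \<kappa>_def using assms by (subst emeasure_distr) (auto simp: measurable_cong_sets[OF sets_density refl])
  also have "\<dots> = emeasure M (S \<inter> (W i -` A \<inter> space M))"
    using assms by (subst emeasure_density) (auto intro!: nn_integral_cong simp: nn_integral_indicator[symmetric] indicator_inter_arith[symmetric] simp del: nn_integral_indicator)
  also have "\<dots> = ennreal (measure M (S \<inter> (W i -` A \<inter> space M)))"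
    using assms by (intro emeasure_eq_measure) 
  finally show ?thesis .
qed

lemma finite_kappa: "S \<in> sets M \<Longrightarrow> finite_measure (\<kappa> i S)"
  by (rule finite_measureI) (simp add: emeasure_kappa[of S UNIV])

lemma W_cyl: "W i -` prod_emb UNIV (\<lambda>_. borel) J (Pi\<^sub>E J A) = {\<omega>. \<forall>n\<in>J. W i \<omega> n \<in> A n}"
  by (auto simp: prod_emb_iff)

lemma cyl_ext:
  assumes S1: "S1 \<in> sets M" and S2: "S2 \<in> sets M" and c: "c1 \<ge> 0" "c2 \<ge> 0"
    and cyl: "\<And>J A. finite J \<Longrightarrow> (\<And>n. n \<in> J \<Longrightarrow> A n \<in> sets borel) \<Longrightarrow>
       c1 * measure M {\<omega>\<in>S1. \<forall>n\<in>J. W i \<omega> n \<in> A n} = c2 * measure M {\<omega>\<in>S2. \<forall>n\<in>J. W i \<omega> n \<in> A n}"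
    and A: "A \<in> sets PS"
  shows "c1 * measure M (S1 \<inter> (W i -` A \<inter> space M)) = c2 * measure M (S2 \<inter> (W i -` A \<inter> space M))"
proof -
  have eq: "density (\<kappa> i S1) (\<lambda>_. ennreal c1) = density (\<kappa> i S2) (\<lambda>_. ennreal c2)"
  proof (rule measure_eqI_PiM_infinite[where I=UNIV and M="\<lambda>_. borel"])
    show "sets (density (\<kappa> i S1) (\<lambda>_. ennreal c1)) = sets PS" by simp
    show "sets (density (\<kappa> i S2) (\<lambda>_. ennreal c2)) = sets PS" by simp
    show "finite_measure (density (\<kappa> i S1) (\<lambda>_. ennreal c1))"
      using S1 by (intro finite_measureI) (simp add: emeasure_density_const emeasure_kappa ennreal_mult_eq_top_iff)
  next
    fix A :: "int \<Rightarrow> real set" and J :: "int set"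
    assume J: "finite J" "J \<subseteq> UNIV" and A: "\<And>n. n \<in> J \<Longrightarrow> A n \<in> sets borel"
    let ?C = "prod_emb UNIV (\<lambda>_. borel) J (Pi\<^sub>E J A)"
    have C: "?C \<in> sets PS" using A J by (intro sets_PiM_I) auto
    have s: "S \<inter> (W i -` ?C \<inter> space M) = {\<omega>\<in>S. \<forall>n\<in>J. W i \<omega> n \<in> A n}" if "S \<in> sets M" for S
      using sets.sets_into_space[OF that] by (auto simp: W_cyl)
    show "emeasure (density (\<kappa> i S1) (\<lambda>_. ennreal c1)) ?C = emeasure (density (\<kappa> i S2) (\<lambda>_. ennreal c2)) ?C"
      using C S1 S2 c cyl[OF J(1) A]
      by (simp add: emeasure_density_const emeasure_kappa s ennreal_mult''[symmetric])
  qed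
  have "ennreal (c1 * measure M (S1 \<inter> (W i -` A \<inter> space M))) = emeasure (density (\<kappa> i S1) (\<lambda>_. ennreal c1)) A"
    using A S1 c by (simp add: emeasure_density_const emeasure_kappa ennreal_mult'')
  also have "\<dots> = emeasure (density (\<kappa> i S2) (\<lambda>_. ennreal c2)) A" by (simp add: eq)
  also have "\<dots> = ennreal (c2 * measure M (S2 \<inter> (W i -` A \<inter> space M)))"
    using A S2 c by (simp add: emeasure_density_const emeasure_kappa ennreal_mult'')
  finally show ?thesis using c by (simp add: ennreal_inj)
qed

lemma window_bound: "finite (J :: int set) \<Longrightarrow> \<exists>a b. a \<le> (i::int) - 1 \<and> i + 1 \<le> b \<and> J \<subseteq> {a..b}"
proof -
  assume J: "finite J"
  define k where "k = (\<Sum>n\<in>J. \<bar>n\<bar>) + \<bar>i\<bar> + 1"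
  have "\<bar>n\<bar> \<le> (\<Sum>n\<in>J. \<bar>n\<bar>)" if "n \<in> J" for n
    using J that by (intro member_le_sum) auto
  then have "J \<subseteq> {-k..k}" unfolding k_def by (force simp: abs_le_iff)
  moreover have "-k \<le> i - 1" "i + 1 \<le> k" unfolding k_def
  proof -
    have "0 \<le> (\<Sum>n\<in>J. \<bar>n\<bar>)" by (rule sum_nonneg) simp
    moreover have "i \<le> \<bar>i\<bar>" "-i \<le> \<bar>i\<bar>" by auto
    ultimately
    show "-((\<Sum>n\<in>J. \<bar>n\<bar>) + \<bar>i\<bar> + 1) \<le> i - 1" "i + 1 \<le> (\<Sum>n\<in>J. \<bar>n\<bar>) + \<bar>i\<bar> + 1" by linarith+
  qed
  ultimately show ?thesis by blast
qed

end

context hmm begin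

lemma cylM:
  assumes "finite J" "\<And>n. n \<in> J \<Longrightarrow> A n \<in> sets borel"
  shows "{\<omega>\<in>space M. \<forall>n\<in>J. W i \<omega> n \<in> A n} \<in> sets M"
proof (rule sets.sets_Collect_finite_All)
  fix n assume "n \<in> J"
  then have [measurable]: "A n \<in> sets borel" by (rule assms(2))
  show "{\<omega>\<in>space M. W i \<omega> n \<in> A n} \<in> sets M"
    by (cases "n = i") (auto simp: W_def)
qed (rule assms(1))

definition wt :: "int \<Rightarrow> int \<Rightarrow> (int \<Rightarrow> nat) \<Rightarrow> real" where
  "wt a b s = \<pi> (s a) * (\<Prod>n\<in>{a..<b}. Q (s n) (s (n + 1)))"

lemma K_cyl:
  assumes j: "j \<in> {0,1}" and E[measurable]: "E \<in> sets borel" and J: "finite J"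
    and A: "\<And>n. n \<in> J \<Longrightarrow> A n \<in> sets borel"
  shows "measure M {\<omega>\<in>{\<omega>\<in>space M. \<theta> i \<omega> = j \<and> X i \<omega> \<in> E}. \<forall>n\<in>J. W i \<omega> n \<in> A n}
       = measure (\<phi> j) E * measure M {\<omega>\<in>{\<omega>\<in>space M. \<theta> i \<omega> = j}. \<forall>n\<in>J. W i \<omega> n \<in> A n}"
proof (cases "i \<in> J \<and> 0 \<notin> A i")
  case True
  then have e: "{\<omega>\<in>{\<omega>\<in>space M. \<theta> i \<omega> = j \<and> X i \<omega> \<in> E}. \<forall>n\<in>J. W i \<omega> n \<in> A n} = {}"
    "{\<omega>\<in>{\<omega>\<in>space M. \<theta> i \<omega> = j}. \<forall>n\<in>J. W i \<omega> n \<in> A n} = {}"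
    by (auto simp: W_def)
  show ?thesis unfolding e by simp
next
  case False
  obtain a b where ab: "a \<le> i - 1" "i + 1 \<le> b" "J \<subseteq> {a..b}" using window_bound[OF J] by blast
  define Bn where "Bn n = (if n \<in> J \<and> n \<noteq> i then A n else UNIV)" for n
  have Bn: "Bn n \<in> sets borel" for n using A by (auto simp: Bn_def)
  define T where "T = {s \<in> PiE {a..b} (\<lambda>_. {0::nat,1}). s i = j}"
  have iab: "i \<in> {a..b}" using ab by auto
  have Wiff: "(\<forall>n\<in>J. W i \<omega> n \<in> A n) \<longleftrightarrow> (\<forall>n\<in>{a..b}. n \<noteq> i \<longrightarrow> X n \<omega> \<in> Bn n)" for \<omega>
    using False ab(3) by (auto simp: W_def Bn_def split: if_splits)
  have restr: "restrict (\<lambda>n. \<theta> n \<omega>) {a..b} \<in> T \<longleftrightarrow> \<theta> i \<omega> = j" if "\<forall>n. \<theta> n \<omega> \<in> {0,1}" for \<omega>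
    using that iab unfolding T_def by auto
  have S1: "{\<omega>\<in>{\<omega>\<in>space M. \<theta> i \<omega> = j \<and> X i \<omega> \<in> E}. \<forall>n\<in>J. W i \<omega> n \<in> A n}
     = {\<omega>\<in>space M. \<theta> i \<omega> = j \<and> X i \<omega> \<in> E} \<inter> {\<omega>\<in>space M. \<forall>n\<in>J. W i \<omega> n \<in> A n}" by auto
  have S2: "{\<omega>\<in>{\<omega>\<in>space M. \<theta> i \<omega> = j}. \<forall>n\<in>J. W i \<omega> n \<in> A n}
     = {\<omega>\<in>space M. \<theta> i \<omega> = j} \<inter> {\<omega>\<in>space M. \<forall>n\<in>J. W i \<omega> n \<in> A n}" by auto
  have cm: "{\<omega>\<in>space M. \<forall>n\<in>J. W i \<omega> n \<in> A n} \<in> sets M" by (rule cylM[OF J A])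
  have m1: "measure M {\<omega>\<in>{\<omega>\<in>space M. \<theta> i \<omega> = j \<and> X i \<omega> \<in> E}. \<forall>n\<in>J. W i \<omega> n \<in> A n}
      = (\<Sum>s\<in>T. wt a b s * (\<Prod>n\<in>{a..b}. measure (\<phi> (s n)) ((Bn(i:=E)) n)))"
    unfolding wt_def
  proof (rule window)
    show "a \<le> b" using ab by simp
    show "(Bn(i := E)) n \<in> sets borel" for n using Bn by auto
    show "T \<subseteq> {a..b} \<rightarrow>\<^sub>E {0, 1}" unfolding T_def by auto
    show "{\<omega>\<in>{\<omega>\<in>space M. \<theta> i \<omega> = j \<and> X i \<omega> \<in> E}. \<forall>n\<in>J. W i \<omega> n \<in> A n} \<in> sets M"
      unfolding S1 using cm by measurable
    fix \<omega> assume "\<omega> \<in> space M" "\<forall>n. \<theta> n \<omega> \<in> {0, 1}"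
    then show "(\<omega> \<in> {\<omega>\<in>{\<omega>\<in>space M. \<theta> i \<omega> = j \<and> X i \<omega> \<in> E}. \<forall>n\<in>J. W i \<omega> n \<in> A n}) =
         (restrict (\<lambda>n. \<theta> n \<omega>) {a..b} \<in> T \<and> (\<forall>n\<in>{a..b}. X n \<omega> \<in> (Bn(i := E)) n))"
      using restr Wiff iab by auto
  qed
  have m2: "measure M {\<omega>\<in>{\<omega>\<in>space M. \<theta> i \<omega> = j}. \<forall>n\<in>J. W i \<omega> n \<in> A n}
      = (\<Sum>s\<in>T. wt a b s * (\<Prod>n\<in>{a..b}. measure (\<phi> (s n)) (Bn n)))"
    unfolding wt_def
  proof (rule window)
    show "a \<le> b" using ab by simp
    show "Bn n \<in> sets borel" for n using Bn by auto
    show "T \<subseteq> {a..b} \<rightarrow>\<^sub>E {0, 1}" unfolding T_def by auto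
    show "{\<omega>\<in>{\<omega>\<in>space M. \<theta> i \<omega> = j}. \<forall>n\<in>J. W i \<omega> n \<in> A n} \<in> sets M"
      unfolding S2 using cm by measurable
    fix \<omega> assume "\<omega> \<in> space M" "\<forall>n. \<theta> n \<omega> \<in> {0, 1}"
    moreover have "Bn i = UNIV" by (simp add: Bn_def)
    ultimately show "(\<omega> \<in> {\<omega>\<in>{\<omega>\<in>space M. \<theta> i \<omega> = j}. \<forall>n\<in>J. W i \<omega> n \<in> A n}) =
         (restrict (\<lambda>n. \<theta> n \<omega>) {a..b} \<in> T \<and> (\<forall>n\<in>{a..b}. X n \<omega> \<in> Bn n))"
      using restr Wiff iab by auto
  qed
  have prodeq: "(\<Prod>n\<in>{a..b}. measure (\<phi> (s n)) ((Bn(i:=E)) n)) = measure (\<phi> j) E * (\<Prod>n\<in>{a..b}. measure (\<phi> (s n)) (Bn n))"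
    if s: "s \<in> T" for s
  proof -
    have sj: "s i = j" using s unfolding T_def by auto
    have "(\<Prod>n\<in>{a..b}. measure (\<phi> (s n)) ((Bn(i:=E)) n)) = measure (\<phi> (s i)) E * (\<Prod>n\<in>{a..b}-{i}. measure (\<phi> (s n)) ((Bn(i:=E)) n))"
      using iab by (subst prod.remove[of _ i]) auto
    also have "(\<Prod>n\<in>{a..b}-{i}. measure (\<phi> (s n)) ((Bn(i:=E)) n)) = (\<Prod>n\<in>{a..b}-{i}. measure (\<phi> (s n)) (Bn n))"
      by (intro prod.cong) auto
    also have "\<dots> = (\<Prod>n\<in>{a..b}. measure (\<phi> (s n)) (Bn n))"
      using iab j sj by (subst (2) prod.remove[of _ i]) (auto simp: Bn_def)
    finally show ?thesis using sj by simp
  qed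
  show ?thesis unfolding m1 m2 sum_distrib_left
  proof (intro sum.cong refl)
    fix s assume "s \<in> T"
    show "wt a b s * (\<Prod>n\<in>{a..b}. measure (\<phi> (s n)) ((Bn(i:=E)) n))
      = measure (\<phi> j) E * (wt a b s * (\<Prod>n\<in>{a..b}. measure (\<phi> (s n)) (Bn n)))"
      unfolding prodeq[OF \<open>s \<in> T\<close>] by simp
  qed
qed

lemma K:
  assumes j: "j \<in> {0,1}" and E[measurable]: "E \<in> sets borel" and A: "A \<in> sets PS"
  shows "measure M ({\<omega>\<in>space M. \<theta> i \<omega> = j \<and> X i \<omega> \<in> E} \<inter> (W i -` A \<inter> space M))
       = measure (\<phi> j) E * measure M ({\<omega>\<in>space M. \<theta> i \<omega> = j} \<inter> (W i -` A \<inter> space M))"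
proof -
  have "1 * measure M ({\<omega>\<in>space M. \<theta> i \<omega> = j \<and> X i \<omega> \<in> E} \<inter> (W i -` A \<inter> space M))
       = measure (\<phi> j) E * measure M ({\<omega>\<in>space M. \<theta> i \<omega> = j} \<inter> (W i -` A \<inter> space M))"
  proof (rule cyl_ext)
    fix J :: "int set" and A' :: "int \<Rightarrow> real set"
    assume "finite J" "\<And>n. n \<in> J \<Longrightarrow> A' n \<in> sets borel"
    then show "1 * measure M {\<omega>\<in>{\<omega>\<in>space M. \<theta> i \<omega> = j \<and> X i \<omega> \<in> E}. \<forall>n\<in>J. W i \<omega> n \<in> A' n}
       = measure (\<phi> j) E * measure M {\<omega>\<in>{\<omega>\<in>space M. \<theta> i \<omega> = j}. \<forall>n\<in>J. W i \<omega> n \<in> A' n}"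
      using K_cyl[OF j E] by simp
  qed (use A in auto)
  then show ?thesis by simp
qed

end

context hmm begin

definition S3 :: "int \<Rightarrow> nat \<Rightarrow> nat \<Rightarrow> nat \<Rightarrow> 'w set" where
  "S3 i u j v = {\<omega>\<in>space M. \<theta> (i - 1) \<omega> = u \<and> \<theta> i \<omega> = j \<and> \<theta> (i + 1) \<omega> = v}"

lemma S3_sets[measurable]: "S3 i u j v \<in> sets M"
  unfolding S3_def by measurable

lemma wt_split:
  assumes "a \<le> i - 1" "i + 1 \<le> b"
  shows "wt a b s = \<pi> (s a) * Q (s (i - 1)) (s i) * Q (s i) (s (i + 1)) *
     (\<Prod>n\<in>{a..<b} - {i - 1} - {i}. Q (s n) (s (n + 1)))"
proof -
  have "(\<Prod>n\<in>{a..<b}. Q (s n) (s (n + 1))) = Q (s (i - 1)) (s (i - 1 + 1)) * (\<Prod>n\<in>{a..<b} - {i - 1}. Q (s n) (s (n + 1)))"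
    using assms by (subst prod.remove[of _ "i - 1"]) auto
  also have "(\<Prod>n\<in>{a..<b} - {i - 1}. Q (s n) (s (n + 1))) = Q (s i) (s (i + 1)) * (\<Prod>n\<in>{a..<b} - {i - 1} - {i}. Q (s n) (s (n + 1)))"
    using assms by (subst prod.remove[of _ i]) auto
  finally show ?thesis unfolding wt_def by (simp add: mult_ac)
qed

lemma AC_cyl:
  assumes u: "u \<in> {0,1}" and v: "v \<in> {0,1}" and J: "finite J"
    and A: "\<And>n. n \<in> J \<Longrightarrow> A n \<in> sets borel"
  shows "Q u 1 * Q 1 v * measure M {\<omega>\<in>S3 i u 0 v. \<forall>n\<in>J. W i \<omega> n \<in> A n}
       = Q u 0 * Q 0 v * measure M {\<omega>\<in>S3 i u 1 v. \<forall>n\<in>J. W i \<omega> n \<in> A n}"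
proof (cases "i \<in> J \<and> 0 \<notin> A i")
  case True
  then have e: "{\<omega>\<in>S3 i u 0 v. \<forall>n\<in>J. W i \<omega> n \<in> A n} = {}" "{\<omega>\<in>S3 i u 1 v. \<forall>n\<in>J. W i \<omega> n \<in> A n} = {}"
    by (auto simp: W_def)
  show ?thesis unfolding e by simp
next
  case False
  obtain a b where ab: "a \<le> i - 1" "i + 1 \<le> b" "J \<subseteq> {a..b}" using window_bound[OF J] by blast
  define Bn where "Bn n = (if n \<in> J \<and> n \<noteq> i then A n else UNIV)" for n
  have Bn: "Bn n \<in> sets borel" for n using A by (auto simp: Bn_def)
  have Bni: "Bn i = UNIV" by (simp add: Bn_def)
  define T where "T j = {s \<in> PiE {a..b} (\<lambda>_. {0::nat,1}). s (i - 1) = u \<and> s i = j \<and> s (i + 1) = v}" for j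
  have iab: "i \<in> {a..b}" "i - 1 \<in> {a..b}" "i + 1 \<in> {a..b}" using ab by auto
  have Wiff: "(\<forall>n\<in>J. W i \<omega> n \<in> A n) \<longleftrightarrow> (\<forall>n\<in>{a..b}. X n \<omega> \<in> Bn n)" for \<omega>
    using False ab(3) by (auto simp: W_def Bn_def split: if_splits)
  have restr: "restrict (\<lambda>n. \<theta> n \<omega>) {a..b} \<in> T j \<longleftrightarrow> \<theta> (i - 1) \<omega> = u \<and> \<theta> i \<omega> = j \<and> \<theta> (i + 1) \<omega> = v"
    if "\<forall>n. \<theta> n \<omega> \<in> {0,1}" for \<omega> j
    using that iab unfolding T_def by auto
  have cm: "{\<omega>\<in>space M. \<forall>n\<in>J. W i \<omega> n \<in> A n} \<in> sets M" by (rule cylM[OF J A])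
  have m: "measure M {\<omega>\<in>S3 i u j v. \<forall>n\<in>J. W i \<omega> n \<in> A n}
      = (\<Sum>s\<in>T j. wt a b s * (\<Prod>n\<in>{a..b}. measure (\<phi> (s n)) (Bn n)))" for j
    unfolding wt_def
  proof (rule window)
    show "a \<le> b" using ab by simp
    show "Bn n \<in> sets borel" for n using Bn by auto
    show "T j \<subseteq> {a..b} \<rightarrow>\<^sub>E {0, 1}" unfolding T_def by auto
    have "{\<omega>\<in>S3 i u j v. \<forall>n\<in>J. W i \<omega> n \<in> A n} = S3 i u j v \<inter> {\<omega>\<in>space M. \<forall>n\<in>J. W i \<omega> n \<in> A n}"
      by (auto simp: S3_def)
    then show "{\<omega>\<in>S3 i u j v. \<forall>n\<in>J. W i \<omega> n \<in> A n} \<in> sets M" using cm by simp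
    fix \<omega> assume "\<omega> \<in> space M" "\<forall>n. \<theta> n \<omega> \<in> {0, 1}"
    then show "(\<omega> \<in> {\<omega>\<in>S3 i u j v. \<forall>n\<in>J. W i \<omega> n \<in> A n}) =
         (restrict (\<lambda>n. \<theta> n \<omega>) {a..b} \<in> T j \<and> (\<forall>n\<in>{a..b}. X n \<omega> \<in> Bn n))"
      using restr Wiff by (auto simp: S3_def)
  qed
  define P where "P s = (\<Prod>n\<in>{a..b}. measure (\<phi> (s n)) (Bn n))" for s
  define R where "R s = (\<Prod>n\<in>{a..<b} - {i - 1} - {i}. Q (s n) (s (n + 1)))" for s
  have "(\<Sum>s\<in>T 0. Q u 1 * Q 1 v * (wt a b s * P s)) = (\<Sum>s\<in>T 1. Q u 0 * Q 0 v * (wt a b s * P s))"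
  proof (rule sum.reindex_bij_witness[where i="\<lambda>s. s(i:=0)" and j="\<lambda>s. s(i:=1)"])
    fix s assume s: "s \<in> T 0"
    then show "s(i := 1, i := 0) = s" unfolding T_def by auto
    show "s(i := 1) \<in> T 1" using s iab unfolding T_def by (auto simp: PiE_iff extensional_def)
    have si: "s (i - 1) = u" "s i = 0" "s (i + 1) = v" using s unfolding T_def by auto
    have sa: "s a = (s(i:=1)) a" using ab by auto
    have Req: "R (s(i:=1)) = R s" unfolding R_def by (intro prod.cong) auto
    have Peq: "P (s(i:=1)) = P s" unfolding P_def
      by (intro prod.cong refl) (use si in \<open>auto simp: Bni\<close>)
    show "Q u 0 * Q 0 v * (wt a b (s(i := 1)) * P (s(i := 1))) = Q u 1 * Q 1 v * (wt a b s * P s)"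
      unfolding wt_split[OF ab(1,2)] Req[unfolded R_def] Peq using si sa[symmetric]
      by (simp add: mult_ac)
  next
    fix s assume s: "s \<in> T 1"
    then show "s(i := 0, i := 1) = s" unfolding T_def by auto
    show "s(i := 0) \<in> T 0" using s iab unfolding T_def by (auto simp: PiE_iff extensional_def)
  qed
  then show ?thesis unfolding m P_def sum_distrib_left by simp
qed

lemma AC:
  assumes A: "A \<in> sets PS"
    and z: "measure M ({\<omega>\<in>space M. \<theta> i \<omega> = 1} \<inter> (W i -` A \<inter> space M)) = 0"
  shows "measure M ({\<omega>\<in>space M. \<theta> i \<omega> = 0} \<inter> (W i -` A \<inter> space M)) = 0"
proof -
  let ?WA = "W i -` A \<inter> space M"
  have WA: "?WA \<in> sets M" using A by measurable
  have zero: "measure M (S3 i u 0 v \<inter> ?WA) = 0" if u: "u \<in> {0,1}" and v: "v \<in> {0,1}" for u v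
  proof -
    have eq: "Q u 1 * Q 1 v * measure M (S3 i u 0 v \<inter> ?WA) = Q u 0 * Q 0 v * measure M (S3 i u 1 v \<inter> ?WA)"
    proof (rule cyl_ext)
      fix J :: "int set" and A' :: "int \<Rightarrow> real set"
      assume "finite J" "\<And>n. n \<in> J \<Longrightarrow> A' n \<in> sets borel"
      then show "Q u 1 * Q 1 v * measure M {\<omega>\<in>S3 i u 0 v. \<forall>n\<in>J. W i \<omega> n \<in> A' n}
         = Q u 0 * Q 0 v * measure M {\<omega>\<in>S3 i u 1 v. \<forall>n\<in>J. W i \<omega> n \<in> A' n}"
        by (rule AC_cyl[OF u v])
    qed (use A u v a2Q in \<open>auto intro!: mult_nonneg_nonneg simp: less_imp_le\<close>)
    have "measure M (S3 i u 1 v \<inter> ?WA) \<le> measure M ({\<omega>\<in>space M. \<theta> i \<omega> = 1} \<inter> ?WA)"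
      using WA by (intro finite_measure_mono) (auto simp: S3_def)
    then have "measure M (S3 i u 1 v \<inter> ?WA) = 0" using z measure_nonneg[of M] by (simp add: antisym)
    with eq have "Q u 1 * Q 1 v * measure M (S3 i u 0 v \<inter> ?WA) = 0" by simp
    moreover have "Q u 1 > 0" "Q 1 v > 0" using a2Q u v by auto
    ultimately show ?thesis by simp
  qed
  have "measure M ({\<omega>\<in>space M. \<theta> i \<omega> = 0} \<inter> ?WA)
      = measure M ((S3 i 0 0 0 \<inter> ?WA) \<union> (S3 i 0 0 1 \<inter> ?WA) \<union> ((S3 i 1 0 0 \<inter> ?WA) \<union> (S3 i 1 0 1 \<inter> ?WA)))"
  proof (rule measure_eq_AE)
    show "AE x in M. (x \<in> {\<omega>\<in>space M. \<theta> i \<omega> = 0} \<inter> ?WA) =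
      (x \<in> (S3 i 0 0 0 \<inter> ?WA) \<union> (S3 i 0 0 1 \<inter> ?WA) \<union> ((S3 i 1 0 0 \<inter> ?WA) \<union> (S3 i 1 0 1 \<inter> ?WA)))"
      using theta01
    proof (rule eventually_mono)
      fix x assume h: "\<forall>n. \<theta> n x \<in> {0, 1}"
      have "\<theta> (i - 1) x \<in> {0,1}" "\<theta> (i + 1) x \<in> {0,1}" using h by blast+
      then show "(x \<in> {\<omega>\<in>space M. \<theta> i \<omega> = 0} \<inter> ?WA) =
        (x \<in> (S3 i 0 0 0 \<inter> ?WA) \<union> (S3 i 0 0 1 \<inter> ?WA) \<union> ((S3 i 1 0 0 \<inter> ?WA) \<union> (S3 i 1 0 1 \<inter> ?WA)))"
        unfolding S3_def by blast
    qed
  qed (use WA in auto)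
  also have "\<dots> \<le> measure M ((S3 i 0 0 0 \<inter> ?WA) \<union> (S3 i 0 0 1 \<inter> ?WA)) + measure M ((S3 i 1 0 0 \<inter> ?WA) \<union> (S3 i 1 0 1 \<inter> ?WA))"
    using WA by (intro measure_Un_le) auto
  also have "\<dots> \<le> (measure M (S3 i 0 0 0 \<inter> ?WA) + measure M (S3 i 0 0 1 \<inter> ?WA)) + (measure M (S3 i 1 0 0 \<inter> ?WA) + measure M (S3 i 1 0 1 \<inter> ?WA))"
    using WA by (intro add_mono measure_Un_le) auto
  also have "\<dots> = 0" using zero by simp
  finally show ?thesis using measure_nonneg[of M] by (simp add: antisym)
qed

end

locale hmm_i = hmm +
  fixes i :: int
begin

definition Th :: "nat \<Rightarrow> 'a set" where
  "Th j = {\<omega>\<in>space M. \<theta> i \<omega> = j}"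

lemma Th_sets[measurable]: "Th j \<in> sets M"
  unfolding Th_def by measurable

definition \<nu> :: "nat \<Rightarrow> (int \<Rightarrow> real) measure" where
  "\<nu> j = \<kappa> i (Th j)"

definition \<rho> :: "(int \<Rightarrow> real) measure" where
  "\<rho> = distr M PS (W i)"

lemma sets_nu[measurable_cong, simp]: "sets (\<nu> j) = sets PS" by (simp add: \<nu>_def)
lemma sets_rho[measurable_cong, simp]: "sets \<rho> = sets PS" by (simp add: \<rho>_def)

lemma finite_nu: "finite_measure (\<nu> j)"
  unfolding \<nu>_def by (rule finite_kappa) simp

lemma prob_rho: "prob_space \<rho>"
  unfolding \<rho>_def by (rule prob_space_distr) simp

lemma sfin_rho: "sigma_finite_measure \<rho>"
  using prob_rho by (simp add: prob_space_def finite_measure_def)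

lemma sfin_nu: "sigma_finite_measure (\<nu> j)"
  using finite_nu by (simp add: finite_measure_def)

lemma sfin_phi: "j \<in> {0,1} \<Longrightarrow> sigma_finite_measure (\<phi> j)"
  using prob_phi by (simp add: prob_space_def finite_measure_def)

lemma emeasure_nu: "A \<in> sets PS \<Longrightarrow> emeasure (\<nu> j) A = ennreal (measure M (Th j \<inter> (W i -` A \<inter> space M)))"
  unfolding \<nu>_def by (rule emeasure_kappa) auto

lemma emeasure_rho: "A \<in> sets PS \<Longrightarrow> emeasure \<rho> A = ennreal (measure M (W i -` A \<inter> space M))"
  unfolding \<rho>_def by (simp add: emeasure_distr emeasure_eq_measure)

lemma ac_nu: "absolutely_continuous \<rho> (\<nu> j)"
  unfolding absolutely_continuous_def
proof
  fix A assume "A \<in> null_sets \<rho>"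
  then have A: "A \<in> sets PS" "emeasure \<rho> A = 0" by auto
  have "measure M (Th j \<inter> (W i -` A \<inter> space M)) \<le> measure M (W i -` A \<inter> space M)"
    using A by (intro finite_measure_mono) auto
  moreover have "measure M (W i -` A \<inter> space M) = 0" using A by (simp add: emeasure_rho)
  ultimately have "measure M (Th j \<inter> (W i -` A \<inter> space M)) = 0" using measure_nonneg[of M] by (simp add: antisym)
  then show "A \<in> null_sets (\<nu> j)" using A by (simp add: null_sets_def emeasure_nu)
qed

definition q :: "nat \<Rightarrow> (int \<Rightarrow> real) \<Rightarrow> ennreal" where
  "q j = RN_deriv \<rho> (\<nu> j)"

lemma q_meas[measurable]: "q j \<in> borel_measurable PS"
  unfolding q_def using borel_measurable_RN_deriv[of \<rho> "\<nu> j"] measurable_cong_sets[OF sets_rho refl] by blast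

lemma meas_rho: "G \<in> borel_measurable PS \<Longrightarrow> G \<in> borel_measurable \<rho>"
  using measurable_cong_sets[OF sets_rho refl] by blast

lemma density_q: "density \<rho> (q j) = \<nu> j"
  unfolding q_def by (rule sigma_finite_measure.density_RN_deriv[OF sfin_rho ac_nu]) simp

lemma q_finite: "AE w in \<rho>. q j w \<noteq> \<infinity>"
  unfolding q_def by (rule sigma_finite_measure.RN_deriv_finite[OF sfin_rho sfin_nu ac_nu]) simp

lemma nn_nu: "G \<in> borel_measurable PS \<Longrightarrow> (\<integral>\<^sup>+w. G w \<partial>\<nu> j) = (\<integral>\<^sup>+w. q j w * G w \<partial>\<rho>)"
proof -
  assume G: "G \<in> borel_measurable PS"
  have "(\<integral>\<^sup>+w. G w \<partial>\<nu> j) = (\<integral>\<^sup>+w. G w \<partial>density \<rho> (q j))" by (simp add: density_q)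
  also have "\<dots> = (\<integral>\<^sup>+w. q j w * G w \<partial>\<rho>)"
    by (rule nn_integral_density) (simp_all add: meas_rho G)
  finally show ?thesis .
qed

lemma WX_meas[measurable]: "(\<lambda>\<omega>. (W i \<omega>, X i \<omega>)) \<in> measurable M (PS \<Otimes>\<^sub>M borel)"
  by measurable

lemma joint:
  assumes j: "j \<in> {0,1}"
  shows "distr (density M (indicator (Th j))) (PS \<Otimes>\<^sub>M borel) (\<lambda>\<omega>. (W i \<omega>, X i \<omega>)) = \<nu> j \<Otimes>\<^sub>M \<phi> j"
proof (rule pair_measure_eqI[symmetric])
  show "sigma_finite_measure (\<nu> j)" by (rule sfin_nu)
  show "sigma_finite_measure (\<phi> j)" by (rule sfin_phi[OF j])
  show "sets (\<nu> j \<Otimes>\<^sub>M \<phi> j) = sets (distr (density M (indicator (Th j))) (PS \<Otimes>\<^sub>M borel) (\<lambda>\<omega>. (W i \<omega>, X i \<omega>)))"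
  proof -
    have "sets (\<nu> j \<Otimes>\<^sub>M \<phi> j) = sets (PS \<Otimes>\<^sub>M borel)"
      by (rule sets_pair_measure_cong) (simp_all add: sets_phi)
    then show ?thesis by simp
  qed
  fix A E assume A: "A \<in> sets (\<nu> j)" and E: "E \<in> sets (\<phi> j)"
  then have A': "A \<in> sets PS" and E'[measurable]: "E \<in> sets borel" by (auto simp: sets_phi)
  have "emeasure (distr (density M (indicator (Th j))) (PS \<Otimes>\<^sub>M borel) (\<lambda>\<omega>. (W i \<omega>, X i \<omega>))) (A \<times> E)
      = emeasure (density M (indicator (Th j))) ((\<lambda>\<omega>. (W i \<omega>, X i \<omega>)) -` (A \<times> E) \<inter> space M)"
    using A' by (subst emeasure_distr) (auto simp: measurable_cong_sets[OF sets_density refl])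
  also have "\<dots> = emeasure M (Th j \<inter> ((\<lambda>\<omega>. (W i \<omega>, X i \<omega>)) -` (A \<times> E) \<inter> space M))"
    using A' by (subst emeasure_density) (auto intro!: nn_integral_cong simp: nn_integral_indicator[symmetric] indicator_inter_arith[symmetric] simp del: nn_integral_indicator)
  also have "Th j \<inter> ((\<lambda>\<omega>. (W i \<omega>, X i \<omega>)) -` (A \<times> E) \<inter> space M) = {\<omega>\<in>space M. \<theta> i \<omega> = j \<and> X i \<omega> \<in> E} \<inter> (W i -` A \<inter> space M)"
    by (auto simp: Th_def)
  also have "emeasure M \<dots> = ennreal (measure (\<phi> j) E * measure M (Th j \<inter> (W i -` A \<inter> space M)))"
    using K[OF j E' A'] by (simp add: emeasure_eq_measure Th_def)
  also have "\<dots> = emeasure (\<nu> j) A * emeasure (\<phi> j) E"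
    using A' j by (simp add: emeasure_nu emeasure_phi_real ennreal_mult'' mult.commute)
  finally show "emeasure (\<nu> j) A * emeasure (\<phi> j) E = emeasure (distr (density M (indicator (Th j))) (PS \<Otimes>\<^sub>M borel) (\<lambda>\<omega>. (W i \<omega>, X i \<omega>))) (A \<times> E)" ..
qed

lemma NN:
  assumes j: "j \<in> {0,1}" and h[measurable]: "h \<in> borel_measurable (PS \<Otimes>\<^sub>M borel)"
  shows "(\<integral>\<^sup>+\<omega>. indicator (Th j) \<omega> * h (W i \<omega>, X i \<omega>) \<partial>M) = (\<integral>\<^sup>+w. q j w * (\<integral>\<^sup>+z. h (w, z) \<partial>\<phi> j) \<partial>\<rho>)"
proof -
  have "(\<integral>\<^sup>+\<omega>. indicator (Th j) \<omega> * h (W i \<omega>, X i \<omega>) \<partial>M) = (\<integral>\<^sup>+\<omega>. h (W i \<omega>, X i \<omega>) \<partial>density M (indicator (Th j)))"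
    by (subst nn_integral_density) auto
  also have "\<dots> = integral\<^sup>N (distr (density M (indicator (Th j))) (PS \<Otimes>\<^sub>M borel) (\<lambda>\<omega>. (W i \<omega>, X i \<omega>))) h"
    by (subst nn_integral_distr) (auto simp: measurable_cong_sets[OF sets_density refl])
  also have "\<dots> = integral\<^sup>N (\<nu> j \<Otimes>\<^sub>M \<phi> j) h" by (simp add: joint[OF j])
  also have "\<dots> = (\<integral>\<^sup>+w. \<integral>\<^sup>+z. h (w, z) \<partial>\<phi> j \<partial>\<nu> j)"
    by (rule sigma_finite_measure.nn_integral_fst[OF sfin_phi[OF j], symmetric])
       (simp add: measurable_cong_sets[OF sets_pair_measure_cong[OF sets_nu sets_phi] refl])
  also have "\<dots> = (\<integral>\<^sup>+w. q j w * (\<integral>\<^sup>+z. h (w, z) \<partial>\<phi> j) \<partial>\<rho>)"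
  proof (rule nn_nu)
    show "(\<lambda>w. \<integral>\<^sup>+z. h (w, z) \<partial>\<phi> j) \<in> borel_measurable PS"
      using sigma_finite_measure.borel_measurable_nn_integral_fst[OF sfin_phi[OF j], of h PS]
      by (simp add: measurable_cong_sets[OF sets_pair_measure_cong[OF refl sets_phi] refl])
  qed
  finally show ?thesis .
qed

end

lemma ratio_id:
  fixes a b :: real assumes "0 \<le> a" "0 \<le> b"
  shows "ennreal a * ennreal (a / (a + b)) + ennreal b * ennreal (a / (a + b)) = ennreal a"
proof (cases "a + b = 0")
  case True then have "a = 0" using assms by linarith
  then show ?thesis by simp
next
  case False
  then have "a + b > 0" using assms by linarith
  define c where "c = a / (a + b)"
  have c: "0 \<le> c" using assms unfolding c_def by simp
  have "ennreal a * ennreal (a / (a + b)) + ennreal b * ennreal (a / (a + b)) = ennreal (a * c) + ennreal (b * c)"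
    using assms c by (simp add: c_def[symmetric] ennreal_mult)
  also have "\<dots> = ennreal (a * c + b * c)"
    using assms c by (simp add: ennreal_plus)
  finally have "ennreal a * ennreal (a / (a + b)) + ennreal b * ennreal (a / (a + b)) = ennreal (a * (a / (a + b)) + b * (a / (a + b)))"
    unfolding c_def .
  also have "a * (a / (a + b)) + b * (a / (a + b)) = (a + b) * (a / (a + b))"
    by (simp only: distrib_right)
  also have "\<dots> = a"
    using \<open>a + b > 0\<close> by simp
  finally show ?thesis .
qed

context hmm_i begin

lemma f0m[measurable]: "f 0 \<in> borel_measurable borel" by (simp add: f_meas)
lemma f1m[measurable]: "f 1 \<in> borel_measurable borel" by (simp add: f_meas)

definition qr :: "nat \<Rightarrow> (int \<Rightarrow> real) \<Rightarrow> real" where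
  "qr j w = enn2real (q j w)"

lemma qr_meas[measurable]: "qr j \<in> borel_measurable PS"
  unfolding qr_def by measurable

lemma qr_nn: "0 \<le> qr j w" by (simp add: qr_def)

definition gg :: "(int \<Rightarrow> real) \<times> real \<Rightarrow> real" where
  "gg p = qr 0 (fst p) * f 0 (snd p) / (qr 0 (fst p) * f 0 (snd p) + qr 1 (fst p) * f 1 (snd p))"

lemma gg_meas[measurable]: "gg \<in> borel_measurable (PS \<Otimes>\<^sub>M borel)"
  unfolding gg_def by measurable

lemma gg_01: "0 \<le> gg p \<and> gg p \<le> 1"
proof -
  have a: "0 \<le> qr 0 (fst p) * f 0 (snd p)" and b: "0 \<le> qr 1 (fst p) * f 1 (snd p)"
    using qr_nn f_nn by (auto intro!: mult_nonneg_nonneg)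
  show ?thesis unfolding gg_def using a b by (auto simp: divide_le_eq_1)
qed

definition Ls :: "'a \<Rightarrow> real" where
  "Ls \<omega> = gg (W i \<omega>, X i \<omega>)"

lemma Ls_meas[measurable]: "Ls \<in> borel_measurable M"
  unfolding Ls_def by measurable

lemma meas_mu: "h \<in> borel_measurable borel \<Longrightarrow> h \<in> borel_measurable \<mu>"
  using measurable_cong_sets[OF sets_mu refl] by blast

lemma inner_density:
  assumes j: "j \<in> {0,1}" and H[measurable]: "H \<in> borel_measurable (PS \<Otimes>\<^sub>M borel)"
  shows "(\<integral>\<^sup>+z. H (w, z) \<partial>\<phi> j) = (\<integral>\<^sup>+z. ennreal (f j z) * H (w, z) \<partial>\<mu>)"
proof -
  have Hm: "(\<lambda>z. H (w, z)) \<in> borel_measurable \<mu>"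
    by (rule meas_mu, rule measurable_Pair2[OF H]) simp
  show ?thesis unfolding \<phi>_def by (rule nn_integral_density[OF fe_meas[OF j] Hm])
qed

lemma Th_split: "AE \<omega> in M. indicator (Th 0) \<omega> + indicator (Th 1) \<omega> = (1::ennreal)"
  using AE_space theta01 by eventually_elim (auto simp: Th_def indicator_def)

lemma key_identity:
  assumes DD[measurable]: "DD \<in> sets (PS \<Otimes>\<^sub>M borel)"
  shows "(\<integral>\<^sup>+\<omega>. ennreal (Ls \<omega>) * indicator DD (W i \<omega>, X i \<omega>) \<partial>M)
       = (\<integral>\<^sup>+\<omega>. indicator (Th 0) \<omega> * indicator DD (W i \<omega>, X i \<omega>) \<partial>M)"
proof -
  define H where "H p = ennreal (gg p) * indicator DD p" for p
  have Hm[measurable]: "H \<in> borel_measurable (PS \<Otimes>\<^sub>M borel)" unfolding H_def by measurable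
  define \<Phi> where "\<Phi> j w = (\<integral>\<^sup>+z. H (w, z) \<partial>\<phi> j)" for j w
  define \<Psi> where "\<Psi> w = (\<integral>\<^sup>+z. indicator DD (w, z) \<partial>\<phi> 0)" for w
  have Phim[measurable]: "\<Phi> j \<in> borel_measurable PS" if "j \<in> {0,1}" for j
    unfolding \<Phi>_def[abs_def]
    using sigma_finite_measure.borel_measurable_nn_integral_fst[OF sfin_phi[OF that], of H PS]
      measurable_cong_sets[OF sets_pair_measure_cong[OF refl sets_phi[of j]] refl] Hm by blast
  have Psim[measurable]: "\<Psi> \<in> borel_measurable PS"
    unfolding \<Psi>_def[abs_def]
    using sigma_finite_measure.borel_measurable_nn_integral_fst[OF sfin_phi[of 0], of "indicator DD" PS]
      measurable_cong_sets[OF sets_pair_measure_cong[OF refl sets_phi[of 0]] refl] by simp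
  have "(\<integral>\<^sup>+\<omega>. ennreal (Ls \<omega>) * indicator DD (W i \<omega>, X i \<omega>) \<partial>M)
      = (\<integral>\<^sup>+\<omega>. indicator (Th 0) \<omega> * H (W i \<omega>, X i \<omega>) + indicator (Th 1) \<omega> * H (W i \<omega>, X i \<omega>) \<partial>M)"
    using Th_split by (intro nn_integral_cong_AE, elim eventually_mono)
       (simp add: H_def Ls_def distrib_right[symmetric])
  also have "\<dots> = (\<integral>\<^sup>+\<omega>. indicator (Th 0) \<omega> * H (W i \<omega>, X i \<omega>) \<partial>M) + (\<integral>\<^sup>+\<omega>. indicator (Th 1) \<omega> * H (W i \<omega>, X i \<omega>) \<partial>M)"
    by (rule nn_integral_add) measurable
  also have "\<dots> = (\<integral>\<^sup>+w. q 0 w * \<Phi> 0 w \<partial>\<rho>) + (\<integral>\<^sup>+w. q 1 w * \<Phi> 1 w \<partial>\<rho>)"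
    unfolding \<Phi>_def by (simp add: NN)
  also have "\<dots> = (\<integral>\<^sup>+w. q 0 w * \<Phi> 0 w + q 1 w * \<Phi> 1 w \<partial>\<rho>)"
    by (rule nn_integral_add[symmetric]) (auto intro!: meas_rho)
  also have "\<dots> = (\<integral>\<^sup>+w. q 0 w * \<Psi> w \<partial>\<rho>)"
  proof (rule nn_integral_cong_AE)
    show "AE w in \<rho>. q 0 w * \<Phi> 0 w + q 1 w * \<Phi> 1 w = q 0 w * \<Psi> w"
      using q_finite[of 0] q_finite[of 1]
    proof (eventually_elim)
      case (elim w)
      have q0: "q 0 w = ennreal (qr 0 w)" using elim by (simp add: qr_def ennreal_enn2real_if)
      have q1: "q 1 w = ennreal (qr 1 w)" using elim by (simp add: qr_def ennreal_enn2real_if)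
      have m1: "(\<lambda>z. H (w, z)) \<in> borel_measurable \<mu>"
        by (rule meas_mu, rule measurable_Pair2[OF Hm]) simp
      have m2: "(\<lambda>z. indicator DD (w, z) :: ennreal) \<in> borel_measurable \<mu>"
      proof -
        have imD: "(indicator DD :: _ \<Rightarrow> ennreal) \<in> borel_measurable (PS \<Otimes>\<^sub>M borel)" by measurable
        show ?thesis by (rule meas_mu, rule measurable_Pair2[OF imD]) simp
      qed
      have "q 0 w * \<Phi> 0 w + q 1 w * \<Phi> 1 w
          = ennreal (qr 0 w) * (\<integral>\<^sup>+z. ennreal (f 0 z) * H (w, z) \<partial>\<mu>) + ennreal (qr 1 w) * (\<integral>\<^sup>+z. ennreal (f 1 z) * H (w, z) \<partial>\<mu>)"
        unfolding \<Phi>_def q0 q1 by (simp add: inner_density)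
      also have "\<dots> = (\<integral>\<^sup>+z. ennreal (qr 0 w) * (ennreal (f 0 z) * H (w, z)) \<partial>\<mu>) + (\<integral>\<^sup>+z. ennreal (qr 1 w) * (ennreal (f 1 z) * H (w, z)) \<partial>\<mu>)"
        using m1 fe_meas[of 0] fe_meas[of 1] by (simp add: nn_integral_cmult)
      also have "\<dots> = (\<integral>\<^sup>+z. ennreal (qr 0 w) * (ennreal (f 0 z) * H (w, z)) + ennreal (qr 1 w) * (ennreal (f 1 z) * H (w, z)) \<partial>\<mu>)"
        using m1 fe_meas[of 0] fe_meas[of 1] by (intro nn_integral_add[symmetric]) auto
      also have "\<dots> = (\<integral>\<^sup>+z. ennreal (qr 0 w) * (ennreal (f 0 z) * indicator DD (w, z)) \<partial>\<mu>)"
      proof (rule nn_integral_cong)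
        fix z
        have e: "ennreal (qr 0 w * f 0 z) * ennreal (gg (w, z)) + ennreal (qr 1 w * f 1 z) * ennreal (gg (w, z)) = ennreal (qr 0 w * f 0 z)"
          unfolding gg_def using qr_nn f_nn by (simp, intro ratio_id) (auto intro!: mult_nonneg_nonneg)
        show "ennreal (qr 0 w) * (ennreal (f 0 z) * H (w, z)) + ennreal (qr 1 w) * (ennreal (f 1 z) * H (w, z))
           = ennreal (qr 0 w) * (ennreal (f 0 z) * indicator DD (w, z))"
          unfolding H_def using e qr_nn f_nn
          by (simp add: ennreal_mult'' mult.assoc[symmetric] distrib_right[symmetric] del: ennreal_plus)
      qed
      also have "\<dots> = q 0 w * \<Psi> w"
        unfolding \<Psi>_def q0 using m2 fe_meas[of 0]
        by (simp add: nn_integral_cmult inner_density[of 0 "indicator DD"])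
      finally show ?case .
    qed
  qed
  also have "\<dots> = (\<integral>\<^sup>+\<omega>. indicator (Th 0) \<omega> * indicator DD (W i \<omega>, X i \<omega>) \<partial>M)"
    unfolding \<Psi>_def by (simp add: NN)
  finally show ?thesis .
qed

end

context hmm_i begin

definition Xv :: "'a \<Rightarrow> int \<Rightarrow> real" where
  "Xv \<omega> = (\<lambda>n. X n \<omega>)"

lemma Xv_meas[measurable]: "Xv \<in> measurable M PS"
  unfolding Xv_def[abs_def] by (rule measurable_PiM_single') (auto simp: space_PiM)

abbreviation FF :: "'a measure" where
  "FF \<equiv> obs_algebra M X"

lemma FF_eq: "FF = vimage_algebra (space M) Xv PS"
  unfolding obs_algebra_def Xv_def[abs_def] ..

lemma sets_FF: "sets FF = {Xv -` A \<inter> space M | A. A \<in> sets PS}"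
  unfolding FF_eq by (rule sets_vimage_algebra2) simp

lemma subalg: "subalgebra M FF"
  unfolding subalgebra_def
proof
  show "sets FF \<subseteq> sets M" unfolding sets_FF by auto
  show "space FF = space M" unfolding FF_eq by simp
qed

lemma Xv_FF: "Xv \<in> measurable FF PS"
  unfolding FF_eq by (rule measurable_vimage_algebra1) simp

definition upd :: "(int \<Rightarrow> real) \<times> real \<Rightarrow> int \<Rightarrow> real" where
  "upd p = (fst p)(i := snd p)"

lemma upd_meas[measurable]: "upd \<in> measurable (PS \<Otimes>\<^sub>M borel) PS"
proof -
  have "(\<lambda>p. \<lambda>n. (if n = i then snd p else fst p n)) \<in> measurable (PS \<Otimes>\<^sub>M borel) PS"
  proof (rule measurable_PiM_single')
    fix n :: int
    show "(\<lambda>p. if n = i then snd p else fst p n) \<in> borel_measurable (PS \<Otimes>\<^sub>M borel)"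
      by (cases "n = i") auto
  qed (auto simp: space_PiM)
  moreover have "(\<lambda>p. \<lambda>n. (if n = i then snd p else fst p n)) = upd"
    by (auto simp: upd_def fun_eq_iff)
  ultimately show ?thesis by simp
qed

lemma upd_WX: "upd (W i \<omega>, X i \<omega>) = Xv \<omega>"
  by (auto simp: upd_def W_def Xv_def fun_eq_iff)

lemma Ls_FF: "Ls \<in> borel_measurable FF"
proof -
  have m1: "(\<lambda>x. x(i := 0)) \<in> measurable PS PS"
  proof -
    have m: "(\<lambda>x. \<lambda>n. (if n = i then 0 else x n)) \<in> measurable PS PS"
    proof (rule measurable_PiM_single')
      fix n :: int
      show "(\<lambda>x. if n = i then 0 else x n) \<in> borel_measurable PS" by (cases "n = i") auto
    qed (auto simp: space_PiM)
    have eq: "(\<lambda>x. \<lambda>n. (if n = i then 0 else x n)) = (\<lambda>x. x(i := 0))" by (auto simp: fun_eq_iff)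
    show ?thesis by (subst eq[symmetric]) (rule m)
  qed
  have m2: "(\<lambda>x. x i) \<in> borel_measurable PS" by (rule measurable_component_singleton) simp
  have "(\<lambda>x. gg (x(i := 0), x i)) \<in> borel_measurable PS" using m1 m2 by measurable
  then have "(\<lambda>\<omega>. gg ((Xv \<omega>)(i := 0), Xv \<omega> i)) \<in> borel_measurable FF"
    using measurable_comp[OF Xv_FF] by (simp add: comp_def)
  moreover have "(\<lambda>\<omega>. gg ((Xv \<omega>)(i := 0), Xv \<omega> i)) = Ls"
  proof
    fix \<omega>
    have "(Xv \<omega>)(i := 0) = W i \<omega>" by (auto simp: Xv_def W_def fun_eq_iff)
    then show "gg ((Xv \<omega>)(i := 0), Xv \<omega> i) = Ls \<omega>" by (simp add: Ls_def Xv_def)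
  qed
  ultimately show ?thesis by simp
qed

lemma Ls_01: "0 \<le> Ls \<omega> \<and> Ls \<omega> \<le> 1"
  unfolding Ls_def by (rule gg_01)

lemma ell_eq: "AE \<omega> in M. ell_inf M \<theta> X i \<omega> = Ls \<omega>"
proof -
  interpret S: finite_measure_subalgebra M FF
    by unfold_locales (rule subalg)
  have ind: "indicator {\<omega>\<in>space M. \<theta> i \<omega> = 0} = (indicator (Th 0) :: 'a \<Rightarrow> real)"
    by (simp add: Th_def)
  have intI: "integrable M (indicator (Th 0) :: 'a \<Rightarrow> real)"
    by (rule integrable_const_bound[where B=1]) (auto simp: indicator_def)
  have intL: "integrable M Ls"
  proof (rule integrable_const_bound[where B=1])
    have "\<bar>Ls \<omega>\<bar> \<le> 1" for \<omega> using Ls_01[of \<omega>] by linarith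
    then show "AE x in M. norm (Ls x) \<le> 1" by simp
  qed simp
  show ?thesis unfolding ell_inf_def ind
  proof (rule S.real_cond_exp_charact[OF _ intI intL Ls_FF])
    fix A assume "A \<in> sets FF"
    then obtain D' where D': "D' \<in> sets PS" and A: "A = Xv -` D' \<inter> space M"
      unfolding sets_FF by auto
    define DD where "DD = upd -` D' \<inter> space (PS \<Otimes>\<^sub>M borel)"
    have DD[measurable]: "DD \<in> sets (PS \<Otimes>\<^sub>M borel)" unfolding DD_def using D' by measurable
    have Aiff: "\<omega> \<in> A \<longleftrightarrow> (W i \<omega>, X i \<omega>) \<in> DD" if "\<omega> \<in> space M" for \<omega>
      using that upd_WX[of \<omega>] unfolding A DD_def by (auto simp: space_pair_measure)
    have Am: "A \<in> sets M" unfolding A using D' by measurable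
    have "(\<integral>\<omega>\<in>A. (indicator (Th 0) \<omega> :: real) \<partial>M) = (\<integral>\<omega>. indicator A \<omega> * indicator (Th 0) \<omega> \<partial>M)"
      by (simp add: set_lebesgue_integral_def real_scaleR_def)
    also have "\<dots> = enn2real (\<integral>\<^sup>+\<omega>. ennreal (indicator A \<omega> * indicator (Th 0) \<omega>) \<partial>M)"
      using Am by (intro integral_eq_nn_integral) auto
    also have "(\<integral>\<^sup>+\<omega>. ennreal (indicator A \<omega> * indicator (Th 0) \<omega>) \<partial>M) = (\<integral>\<^sup>+\<omega>. indicator (Th 0) \<omega> * indicator DD (W i \<omega>, X i \<omega>) \<partial>M)"
      by (intro nn_integral_cong) (auto simp: Aiff indicator_def)
    also have "\<dots> = (\<integral>\<^sup>+\<omega>. ennreal (Ls \<omega>) * indicator DD (W i \<omega>, X i \<omega>) \<partial>M)"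
      by (rule key_identity[OF DD, symmetric])
    also have "\<dots> = (\<integral>\<^sup>+\<omega>. ennreal (indicator A \<omega> * Ls \<omega>) \<partial>M)"
      by (intro nn_integral_cong) (auto simp: Aiff indicator_def)
    also have "enn2real \<dots> = (\<integral>\<omega>. indicator A \<omega> * Ls \<omega> \<partial>M)"
      using Am Ls_01 by (intro integral_eq_nn_integral[symmetric]) auto
    also have "\<dots> = (\<integral>\<omega>\<in>A. Ls \<omega> \<partial>M)"
      by (simp add: set_lebesgue_integral_def real_scaleR_def)
    finally show "(\<integral>\<omega>\<in>A. (indicator (Th 0) \<omega> :: real) \<partial>M) = (\<integral>\<omega>\<in>A. Ls \<omega> \<partial>M)" .
  qed
qed

end

context hmm begin

lemma lr_meas[measurable]: "lr f \<in> borel_measurable borel"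
proof -
  have [measurable]: "f 0 \<in> borel_measurable borel" "f 1 \<in> borel_measurable borel" by (simp_all add: f_meas)
  show ?thesis unfolding lr_def[abs_def] by measurable
qed

lemma theta_law: "j \<in> {0,1} \<Longrightarrow> E \<in> sets borel \<Longrightarrow>
   measure M {\<omega>\<in>space M. \<theta> n \<omega> = j \<and> X n \<omega> \<in> E} = \<pi> j * measure (\<phi> j) E"
proof -
  assume j: "j \<in> {0,1}" and E: "E \<in> sets borel"
  have "measure M {\<omega>\<in>space M. \<theta> n \<omega> = j \<and> X n \<omega> \<in> E} = measure M {\<omega>\<in>space M. \<forall>m\<in>{n..n}. \<theta> m \<omega> = (\<lambda>_. j) m \<and> X m \<omega> \<in> (\<lambda>_. E) m}"
    by (rule arg_cong[where f="measure M"]) auto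
  also have "\<dots> = \<pi> j * measure (\<phi> j) E"
    using j E by (subst formula) auto
  finally show ?thesis .
qed

lemma X1_law:
  assumes E[measurable]: "E \<in> sets borel"
  shows "measure M {\<omega>\<in>space M. X 1 \<omega> \<in> E} = \<pi> 0 * measure (\<phi> 0) E + \<pi> 1 * measure (\<phi> 1) E"
proof -
  have "measure M {\<omega>\<in>space M. X 1 \<omega> \<in> E} = measure M ({\<omega>\<in>space M. \<theta> 1 \<omega> = 0 \<and> X 1 \<omega> \<in> E} \<union> {\<omega>\<in>space M. \<theta> 1 \<omega> = 1 \<and> X 1 \<omega> \<in> E})"
  proof (rule measure_eq_AE)
    show "AE x in M. (x \<in> {\<omega>\<in>space M. X 1 \<omega> \<in> E}) = (x \<in> {\<omega>\<in>space M. \<theta> 1 \<omega> = 0 \<and> X 1 \<omega> \<in> E} \<union> {\<omega>\<in>space M. \<theta> 1 \<omega> = 1 \<and> X 1 \<omega> \<in> E})"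
      using theta01
    proof (rule eventually_mono)
      fix x assume "\<forall>n. \<theta> n x \<in> {0, 1}"
      then have "\<theta> 1 x \<in> {0,1}" by blast
      then show "(x \<in> {\<omega>\<in>space M. X 1 \<omega> \<in> E}) = (x \<in> {\<omega>\<in>space M. \<theta> 1 \<omega> = 0 \<and> X 1 \<omega> \<in> E} \<union> {\<omega>\<in>space M. \<theta> 1 \<omega> = 1 \<and> X 1 \<omega> \<in> E})"
        by auto
    qed
  qed measurable
  also have "\<dots> = measure M {\<omega>\<in>space M. \<theta> 1 \<omega> = 0 \<and> X 1 \<omega> \<in> E} + measure M {\<omega>\<in>space M. \<theta> 1 \<omega> = 1 \<and> X 1 \<omega> \<in> E}"
    by (rule finite_measure_Union) (auto, measurable)
  also have "\<dots> = \<pi> 0 * measure (\<phi> 0) E + \<pi> 1 * measure (\<phi> 1) E"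
    using E by (simp add: theta_law)
  finally show ?thesis .
qed

lemma lr_atom_M: "measure M {\<omega>\<in>space M. lr f (X 1 \<omega>) = ereal c} = 0"
proof (rule ccontr)
  define F where "F = lr_cdf M f X"
  define m where "m = measure M {\<omega>\<in>space M. lr f (X 1 \<omega>) = ereal c}"
  assume "measure M {\<omega>\<in>space M. lr f (X 1 \<omega>) = ereal c} \<noteq> 0"
  moreover have "0 \<le> m" unfolding m_def by simp
  ultimately have mpos: "m > 0" unfolding m_def by linarith
  have "isCont F c" using cont unfolding F_def by (simp add: continuous_on_eq_continuous_at)
  then obtain d where d: "d > 0" "\<And>y. dist y c < d \<Longrightarrow> dist (F y) (F c) < m"
    using mpos unfolding continuous_at_eps_delta by blast
  define y where "y = c - d / 2"
  have "dist y c < d" using d by (simp add: y_def dist_real_def)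
  then have Fy: "F c - F y < m" using d(2)[of y] by (simp add: dist_real_def abs_less_iff)
  have sub: "{\<omega>\<in>space M. lr f (X 1 \<omega>) \<le> ereal y} \<union> {\<omega>\<in>space M. lr f (X 1 \<omega>) = ereal c} \<subseteq> {\<omega>\<in>space M. lr f (X 1 \<omega>) \<le> ereal c}"
  proof -
    have tr: "x \<le> ereal y \<Longrightarrow> x \<le> ereal c" for x using d by (auto simp: y_def intro: order_trans)
    show ?thesis using tr by auto
  qed
  have disj: "{\<omega>\<in>space M. lr f (X 1 \<omega>) \<le> ereal y} \<inter> {\<omega>\<in>space M. lr f (X 1 \<omega>) = ereal c} = {}"
    using d by (auto simp: y_def)
  have "F y + m = measure M ({\<omega>\<in>space M. lr f (X 1 \<omega>) \<le> ereal y} \<union> {\<omega>\<in>space M. lr f (X 1 \<omega>) = ereal c})"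
    unfolding F_def m_def lr_cdf_def using disj by (subst finite_measure_Union) (auto, measurable)
  also have "\<dots> \<le> F c" unfolding F_def lr_cdf_def using sub by (intro finite_measure_mono) (auto, measurable)
  finally show False using Fy by simp
qed

lemma lr_atom: "j \<in> {0,1} \<Longrightarrow> measure (\<phi> j) {z. lr f z = ereal c} = 0"
proof -
  assume j: "j \<in> {0,1}"
  have E: "{z. lr f z = ereal c} \<in> sets borel" by measurable
  have "\<pi> 0 * measure (\<phi> 0) {z. lr f z = ereal c} + \<pi> 1 * measure (\<phi> 1) {z. lr f z = ereal c} = 0"
    using X1_law[OF E] lr_atom_M[of c] by simp
  moreover have "0 \<le> \<pi> 0 * measure (\<phi> 0) {z. lr f z = ereal c}" "0 \<le> \<pi> 1 * measure (\<phi> 1) {z. lr f z = ereal c}"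
    using pi_nn by auto
  ultimately have "\<pi> 0 * measure (\<phi> 0) {z. lr f z = ereal c} = 0" "\<pi> 1 * measure (\<phi> 1) {z. lr f z = ereal c} = 0"
    by linarith+
  then show ?thesis using j pi_pos[of 0] pi_pos[of 1] by auto
qed

lemma lr_pos:
  assumes c: "0 < c1" "c1 < c2"
  shows "measure (\<phi> 0) {z. ereal c1 < lr f z \<and> lr f z < ereal c2} > 0"
proof -
  define c' where "c' = (c1 + c2) / 2"
  have c': "c1 < c'" "c' < c2" using c unfolding c'_def by auto
  define E where "E = {z. ereal c1 < lr f z \<and> lr f z \<le> ereal c'}"
  have E[measurable]: "E \<in> sets borel" unfolding E_def by measurable
  have "lr_cdf M f X c1 < lr_cdf M f X c'"
    using smono c c' by (auto intro: strict_mono_onD)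
  moreover have "lr_cdf M f X c' = lr_cdf M f X c1 + measure M {\<omega>\<in>space M. X 1 \<omega> \<in> E}"
  proof -
    have tr: "x \<le> ereal c1 \<Longrightarrow> x \<le> ereal c'" for x using c' by (meson ereal_less_eq(3) less_imp_le order_trans)
    have "{\<omega>\<in>space M. lr f (X 1 \<omega>) \<le> ereal c'} = {\<omega>\<in>space M. lr f (X 1 \<omega>) \<le> ereal c1} \<union> {\<omega>\<in>space M. X 1 \<omega> \<in> E}"
      using tr by (auto simp: E_def)
    then show ?thesis unfolding lr_cdf_def by (simp, subst finite_measure_Union) (auto simp: E_def, measurable)
  qed
  ultimately have pos: "measure M {\<omega>\<in>space M. X 1 \<omega> \<in> E} > 0" by simp
  have le: "measure (\<phi> 1) E \<le> c' * measure (\<phi> 0) E"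
  proof -
    have "ennreal (measure (\<phi> 1) E) = (\<integral>\<^sup>+z. ennreal (f 1 z) * indicator E z \<partial>\<mu>)"
      by (simp add: emeasure_phi_real[symmetric] emeasure_phi)
    also have "\<dots> \<le> (\<integral>\<^sup>+z. ennreal c' * (ennreal (f 0 z) * indicator E z) \<partial>\<mu>)"
    proof (rule nn_integral_mono)
      fix z
      show "ennreal (f 1 z) * indicator E z \<le> ennreal c' * (ennreal (f 0 z) * indicator E z)"
      proof (cases "z \<in> E")
        case True
        have f0: "f 0 z \<noteq> 0"
        proof
          assume "f 0 z = 0"
          then have "lr f z = 0 \<or> lr f z = \<infinity>" unfolding lr_def by auto
          then show False using True c c' unfolding E_def by auto
        qed
        then have "lr f z = ereal (f 1 z / f 0 z)" unfolding lr_def by simp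
        then have "f 1 z / f 0 z \<le> c'" using True unfolding E_def by simp
        moreover have "f 0 z > 0" using f0 f_nn[of 0 z] by simp
        ultimately have "f 1 z \<le> c' * f 0 z" by (simp add: divide_le_eq)
        then show ?thesis using True c c' f_nn[of 0 z] f_nn[of 1 z]
          by (simp add: ennreal_mult''[symmetric] ennreal_leI)
      qed simp
    qed
    also have "\<dots> = ennreal c' * (\<integral>\<^sup>+z. ennreal (f 0 z) * indicator E z \<partial>\<mu>)"
    proof (rule nn_integral_cmult)
      have [measurable]: "f 0 \<in> borel_measurable borel" by (simp add: f_meas)
      have "(\<lambda>z. ennreal (f 0 z) * indicator E z) \<in> borel_measurable borel" by measurable
      then show "(\<lambda>z. ennreal (f 0 z) * indicator E z) \<in> borel_measurable \<mu>"
        using measurable_cong_sets[OF sets_mu refl] by blast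
    qed
    also have "\<dots> = ennreal (c' * measure (\<phi> 0) E)"
      using c c' by (simp add: emeasure_phi_real[symmetric] emeasure_phi ennreal_mult'')
    finally have "ennreal (measure (\<phi> 1) E) \<le> ennreal (c' * measure (\<phi> 0) E)" .
    moreover have "0 \<le> c' * measure (\<phi> 0) E" using c c' by simp
    ultimately show ?thesis using ennreal_le_iff by blast
  qed
  show ?thesis
  proof (rule ccontr)
    assume "\<not> ?thesis"
    moreover have "measure (\<phi> 0) E \<le> measure (\<phi> 0) {z. ereal c1 < lr f z \<and> lr f z < ereal c2}"
    proof -
      have tr: "x < ereal c2" if "x \<le> ereal c'" for x
      proof -
        have "ereal c' < ereal c2" using c' by simp
        with that show ?thesis by (rule le_less_trans)
      qed
      show ?thesis
        using prob_phi[of 0] tr unfolding E_def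
        by (intro finite_measure.finite_measure_mono[OF prob_space.finite_measure]) (auto, measurable)
    qed
    ultimately have "measure (\<phi> 0) E \<le> 0" by simp
    then have z0: "measure (\<phi> 0) E = 0" using measure_nonneg[of "\<phi> 0" E] by simp
    then have "measure (\<phi> 1) E \<le> 0" using le by simp
    then have "measure (\<phi> 1) E = 0" using measure_nonneg[of "\<phi> (Suc 0)" E] by simp
    with z0 pos X1_law[OF E] show False by simp
  qed
qed

end

lemma level_real:
  fixes a0 b0 a1 b1 t :: real
  assumes "0 \<le> a0" "0 \<le> b0" "0 \<le> a1" "0 \<le> b1" "0 < t" "t < 1" "a0*b0/(a0*b0 + a1*b1) = t"
  shows "b0 \<noteq> 0 \<and> b1 / b0 = a0 * (1 - t) / (t * a1)"
proof -
  define A where "A = a0 * b0"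
  define B where "B = a1 * b1"
  have A: "A \<ge> 0" "B \<ge> 0" using assms unfolding A_def B_def by auto
  have AB: "A + B \<noteq> 0"
  proof
    assume "A + B = 0" then show False using assms(5,7) unfolding A_def B_def by simp
  qed
  then have eq: "A = t * (A + B)" using assms(7) unfolding A_def[symmetric] B_def[symmetric] by (simp add: field_simps)
  have Apos: "A > 0"
  proof (rule ccontr)
    assume "\<not> A > 0" then have "A = 0" using A by simp
    then have "t * B = 0" using eq by simp
    then have "B = 0" using assms(5) by simp
    with \<open>A = 0\<close> AB show False by simp
  qed
  have Beq: "B = A * (1 - t) / t" using eq assms(5) by (simp add: field_simps)
  have Bpos: "B > 0" using Beq Apos assms(5,6) by simp
  have a0: "a0 > 0" "b0 > 0" using Apos assms(1,2) unfolding A_def by (auto simp: zero_less_mult_iff)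
  have a1: "a1 > 0" "b1 > 0" using Bpos assms(3,4) unfolding B_def by (auto simp: zero_less_mult_iff)
  have "b1 / b0 = (B / a1) / (A / a0)" unfolding A_def B_def using a0 a1 by simp
  also have "\<dots> = a0 * (1 - t) / (t * a1)" unfolding Beq using a0 a1 Apos assms(5) by (simp add: field_simps)
  finally show ?thesis using a0 by simp
qed

lemma interval_real:
  fixes a0 a1 b0 a b r :: real
  assumes "0 < a0" "0 < a1" "0 < b0" "0 < a" "a < b" "b < 1"
    "a0 * (1 - b) / (b * a1) < r" "r < a0 * (1 - a) / (a * a1)"
  shows "a < a0 * b0 / (a0 * b0 + a1 * (r * b0)) \<and> a0 * b0 / (a0 * b0 + a1 * (r * b0)) < b"
proof -
  have rpos: "r > 0" using assms by (smt (verit) divide_pos_pos mult_pos_pos)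
  have "a0 * b0 + a1 * (r * b0) = b0 * (a0 + a1 * r)" by (simp add: algebra_simps)
  then have e: "a0 * b0 / (a0 * b0 + a1 * (r * b0)) = a0 / (a0 + a1 * r)"
    using assms(3) by simp
  have d: "a0 + a1 * r > 0" using assms(1,2) rpos by (simp add: add_pos_pos)
  have 1: "a * a1 * r < a0 * (1 - a)" using assms(8) assms(2,4) by (simp add: field_simps)
  have 2: "a0 * (1 - b) < b * a1 * r" using assms(7) assms(2,4,5) by (simp add: field_simps)
  have "a < a0 / (a0 + a1 * r)" using d 1 by (simp add: field_simps)
  moreover have "a0 / (a0 + a1 * r) < b" using d 2 by (simp add: field_simps)
  ultimately show ?thesis using e by simp
qed

context hmm_i begin

lemma gg_level:
  assumes t: "0 < t" "t < 1" and g: "gg (w, z) = t"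
  shows "lr f z = ereal (qr 0 w * (1 - t) / (t * qr 1 w))"
proof -
  have "f 0 z \<noteq> 0 \<and> f 1 z / f 0 z = qr 0 w * (1 - t) / (t * qr 1 w)"
    using g t unfolding gg_def
    by (intro level_real) (auto simp: qr_nn f_nn)
  then show ?thesis unfolding lr_def by simp
qed

lemma inner_zero:
  assumes j: "j \<in> {0,1}" and t: "0 < t" "t < 1"
  shows "(\<integral>\<^sup>+z. indicator {p \<in> space (PS \<Otimes>\<^sub>M borel). gg p = t} (w, z) \<partial>\<phi> j) = 0"
proof -
  have [measurable]: "{z. gg (w, z) = t} \<in> sets borel"
  proof -
    have "(\<lambda>z. gg (w, z)) \<in> borel_measurable borel" by (rule measurable_Pair2[OF gg_meas]) simp
    then show ?thesis by measurable
  qed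
  have "(\<integral>\<^sup>+z. indicator {p \<in> space (PS \<Otimes>\<^sub>M borel). gg p = t} (w, z) \<partial>\<phi> j) = (\<integral>\<^sup>+z. indicator {z. gg (w, z) = t} z \<partial>\<phi> j)"
    by (intro nn_integral_cong) (auto simp: indicator_def space_pair_measure)
  also have "\<dots> = emeasure (\<phi> j) {z. gg (w, z) = t}"
    by (simp add: sets_phi)
  also have "\<dots> \<le> emeasure (\<phi> j) {z. lr f z = ereal (qr 0 w * (1 - t) / (t * qr 1 w))}"
    using gg_level[OF t] by (intro emeasure_mono) (auto simp: sets_phi)
  also have "\<dots> = 0" using j by (simp add: emeasure_phi_real lr_atom)
  finally show ?thesis by simp
qed

lemma atom_Ls:
  assumes t: "0 < t" "t < 1"
  shows "measure M {\<omega>\<in>space M. Ls \<omega> = t} = 0"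
proof -
  define DD where "DD = {p \<in> space (PS \<Otimes>\<^sub>M borel). gg p = t}"
  have DD[measurable]: "DD \<in> sets (PS \<Otimes>\<^sub>M borel)" unfolding DD_def by measurable
  have set_eq: "{\<omega>\<in>space M. Ls \<omega> = t} = (\<lambda>\<omega>. (W i \<omega>, X i \<omega>)) -` DD \<inter> space M"
    by (auto simp: DD_def Ls_def space_pair_measure)
  have pm: "(\<lambda>\<omega>. (W i \<omega>, X i \<omega>)) -` DD \<inter> space M \<in> sets M" by (rule measurable_sets[OF WX_meas DD])
  have "emeasure M {\<omega>\<in>space M. Ls \<omega> = t} = (\<integral>\<^sup>+\<omega>. indicator ((\<lambda>\<omega>. (W i \<omega>, X i \<omega>)) -` DD \<inter> space M) \<omega> \<partial>M)"
    unfolding set_eq by (rule nn_integral_indicator[OF pm, symmetric])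
  also have "\<dots> = (\<integral>\<^sup>+\<omega>. indicator DD (W i \<omega>, X i \<omega>) \<partial>M)"
    by (intro nn_integral_cong) (auto simp: indicator_def)
  also have "\<dots> = (\<integral>\<^sup>+\<omega>. indicator (Th 0) \<omega> * indicator DD (W i \<omega>, X i \<omega>) + indicator (Th 1) \<omega> * indicator DD (W i \<omega>, X i \<omega>) \<partial>M)"
    using Th_split by (intro nn_integral_cong_AE, elim eventually_mono) (simp add: distrib_right[symmetric])
  also have "\<dots> = (\<integral>\<^sup>+\<omega>. indicator (Th 0) \<omega> * indicator DD (W i \<omega>, X i \<omega>) \<partial>M) + (\<integral>\<^sup>+\<omega>. indicator (Th 1) \<omega> * indicator DD (W i \<omega>, X i \<omega>) \<partial>M)"
    by (rule nn_integral_add) measurable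
  also have "\<dots> = 0"
    using inner_zero[OF _ t] by (simp add: NN DD_def)
  finally show ?thesis by (simp add: measure_def)
qed

lemma nu_space: "emeasure (\<nu> 0) UNIV = ennreal (\<pi> 0)"
proof -
  have "emeasure (\<nu> 0) UNIV = ennreal (measure M (Th 0 \<inter> (W i -` UNIV \<inter> space M)))"
    by (rule emeasure_nu) simp
  also have "Th 0 \<inter> (W i -` UNIV \<inter> space M) = {\<omega>\<in>space M. \<theta> i \<omega> = 0 \<and> X i \<omega> \<in> UNIV}"
    by (auto simp: Th_def)
  also have "measure M \<dots> = \<pi> 0" using theta_law[of 0 UNIV i] by simp
  finally show ?thesis .
qed

lemma pos_Ls:
  assumes ab: "0 < a" "a < b" "b < 1"
  shows "measure M {\<omega>\<in>space M. a < Ls \<omega> \<and> Ls \<omega> < b} > 0"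
proof (rule ccontr)
  assume "\<not> ?thesis"
  then have m0: "measure M {\<omega>\<in>space M. a < Ls \<omega> \<and> Ls \<omega> < b} = 0"
    using measure_nonneg[of M "{\<omega>\<in>space M. a < Ls \<omega> \<and> Ls \<omega> < b}"] by linarith
  define DD where "DD = {p \<in> space (PS \<Otimes>\<^sub>M borel). a < gg p \<and> gg p < b}"
  have DD[measurable]: "DD \<in> sets (PS \<Otimes>\<^sub>M borel)" unfolding DD_def by measurable
  define \<Gamma> where "\<Gamma> w = (\<integral>\<^sup>+z. indicator DD (w, z) \<partial>\<phi> 0)" for w
  have Gm[measurable]: "\<Gamma> \<in> borel_measurable PS"
    unfolding \<Gamma>_def[abs_def]
    using sigma_finite_measure.borel_measurable_nn_integral_fst[OF sfin_phi[of 0], of "indicator DD" PS]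
      measurable_cong_sets[OF sets_pair_measure_cong[OF refl sets_phi[of 0]] refl] by simp
  have "(\<integral>\<^sup>+w. q 0 w * \<Gamma> w \<partial>\<rho>) = (\<integral>\<^sup>+\<omega>. indicator (Th 0) \<omega> * indicator DD (W i \<omega>, X i \<omega>) \<partial>M)"
    unfolding \<Gamma>_def by (simp add: NN)
  also have "\<dots> \<le> (\<integral>\<^sup>+\<omega>. indicator {\<omega>\<in>space M. a < Ls \<omega> \<and> Ls \<omega> < b} \<omega> \<partial>M)"
    by (intro nn_integral_mono) (auto simp: indicator_def DD_def Ls_def space_pair_measure)
  also have "\<dots> = emeasure M {\<omega>\<in>space M. a < Ls \<omega> \<and> Ls \<omega> < b}"
    by (rule nn_integral_indicator) measurable
  also have "\<dots> = 0" using m0 by (simp add: emeasure_eq_measure)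
  finally have "(\<integral>\<^sup>+w. q 0 w * \<Gamma> w \<partial>\<rho>) = 0" by simp
  then have AE0: "AE w in \<rho>. q 0 w * \<Gamma> w = 0"
    by (subst (asm) nn_integral_0_iff_AE) (auto intro: meas_rho)
  have AEZ: "AE w in \<rho>. q 0 w = 0 \<or> q 1 w = 0"
    using AE0 q_finite[of 0] q_finite[of 1]
  proof eventually_elim
    case (elim w)
    show ?case
    proof (rule ccontr)
      assume "\<not> (q 0 w = 0 \<or> q 1 w = 0)"
      then have qp: "qr 0 w > 0" "qr 1 w > 0" using elim unfolding qr_def
        by (auto simp: enn2real_positive_iff less_top[symmetric] zero_less_iff_neq_zero)
      define ca where "ca = qr 0 w * (1 - a) / (a * qr 1 w)"
      define cb where "cb = qr 0 w * (1 - b) / (b * qr 1 w)"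
      have cab: "0 < cb" "cb < ca" unfolding ca_def cb_def using qp ab
        by (auto simp: field_simps intro!: mult_strict_left_mono)
      have sub: "{z. ereal cb < lr f z \<and> lr f z < ereal ca} \<subseteq> {z. (w, z) \<in> DD}"
      proof
        fix z assume z: "z \<in> {z. ereal cb < lr f z \<and> lr f z < ereal ca}"
        have f0: "f 0 z \<noteq> 0"
        proof
          assume "f 0 z = 0"
          then have "lr f z = 0 \<or> lr f z = \<infinity>" unfolding lr_def by auto
          then show False using z cab by auto
        qed
        then have lrz: "lr f z = ereal (f 1 z / f 0 z)" unfolding lr_def by simp
        define r where "r = f 1 z / f 0 z"
        have r: "cb < r" "r < ca" using z lrz unfolding r_def by auto
        have f0p: "f 0 z > 0" using f0 f_nn[of 0 z] by simp
        have f1: "f 1 z = r * f 0 z" unfolding r_def using f0 by simp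
        have "a < gg (w, z) \<and> gg (w, z) < b"
          unfolding gg_def using interval_real[OF qp(1) qp(2) f0p ab r[unfolded ca_def cb_def]] f1 by simp
        then show "z \<in> {z. (w, z) \<in> DD}" unfolding DD_def by (simp add: space_pair_measure)
      qed
      have "0 < measure (\<phi> 0) {z. ereal cb < lr f z \<and> lr f z < ereal ca}" by (rule lr_pos[OF cab])
      also have "\<dots> \<le> measure (\<phi> 0) {z. (w, z) \<in> DD}"
      proof (rule finite_measure.finite_measure_mono[OF prob_space.finite_measure[OF prob_phi]])
        show "{z. (w, z) \<in> DD} \<in> sets (\<phi> 0)" using sets_Pair1[OF DD, of w] by (simp add: sets_phi vimage_def)
      qed (use sub in auto)
      finally have "0 < measure (\<phi> 0) {z. (w, z) \<in> DD}" by simp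
      moreover have "\<Gamma> w = emeasure (\<phi> 0) {z. (w, z) \<in> DD}"
      proof -
        have "\<Gamma> w = (\<integral>\<^sup>+z. indicator {z. (w, z) \<in> DD} z \<partial>\<phi> 0)"
          unfolding \<Gamma>_def by (intro nn_integral_cong) (auto simp: indicator_def)
        also have "\<dots> = emeasure (\<phi> 0) {z. (w, z) \<in> DD}"
          using sets_Pair1[OF DD, of w] by (intro nn_integral_indicator) (simp add: sets_phi vimage_def)
        finally show ?thesis .
      qed
      ultimately have "\<Gamma> w \<noteq> 0" by (simp add: emeasure_phi_real)
      moreover have "q 0 w \<noteq> 0" using qp unfolding qr_def by auto
      ultimately show False using elim by simp
    qed
  qed
  define Z where "Z = {w. q 1 w = 0}"
  have Z[measurable]: "Z \<in> sets PS"
  proof -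
    have "Z = q 1 -` {0} \<inter> space PS" by (auto simp: Z_def)
    also have "\<dots> \<in> sets PS" by (rule measurable_sets[OF q_meas]) simp
    finally show ?thesis .
  qed
  have "emeasure (\<nu> 1) Z = (\<integral>\<^sup>+w. indicator Z w \<partial>\<nu> 1)"
    by (rule nn_integral_indicator[symmetric]) simp
  also have "\<dots> = (\<integral>\<^sup>+w. q 1 w * indicator Z w \<partial>\<rho>)" by (rule nn_nu) measurable
  also have "\<dots> = 0" by (auto intro!: nn_integral_zero' simp: Z_def indicator_def)
  finally have "measure M (Th 1 \<inter> (W i -` Z \<inter> space M)) = 0"
    using Z by (simp add: emeasure_nu)
  then have "measure M (Th 0 \<inter> (W i -` Z \<inter> space M)) = 0"
    using AC[OF Z] unfolding Th_def by simp
  then have "emeasure (\<nu> 0) Z = 0" using Z by (simp add: emeasure_nu)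
  then have z0: "(\<integral>\<^sup>+w. q 0 w * indicator Z w \<partial>\<rho>) = 0"
    using nn_nu[of "indicator Z" 0] nn_integral_indicator[of Z "\<nu> 0"] by simp
  have "ennreal (\<pi> 0) = emeasure (\<nu> 0) UNIV" by (simp add: nu_space)
  also have "\<dots> = (\<integral>\<^sup>+w. 1 \<partial>\<nu> 0)"
  proof -
    have "space (\<nu> 0) = UNIV" using sets_eq_imp_space_eq[OF sets_nu[of 0]] by simp
    then show ?thesis by simp
  qed
  also have "\<dots> = (\<integral>\<^sup>+w. q 0 w * 1 \<partial>\<rho>)" by (rule nn_nu) simp
  also have "\<dots> = (\<integral>\<^sup>+w. q 0 w * indicator Z w \<partial>\<rho>)"
    using AEZ by (intro nn_integral_cong_AE, elim eventually_mono) (auto simp: Z_def indicator_def)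
  also have "\<dots> = 0" by (rule z0)
  finally show False using pi_pos[of 0] by simp
qed

end


theorem lemma18:
  fixes M :: "'w measure" and \<mu> :: "real measure" and D :: "real set"
    and Q :: "nat \<Rightarrow> nat \<Rightarrow> real" and \<pi> :: "nat \<Rightarrow> real" and f :: "nat \<Rightarrow> real \<Rightarrow> real"
    and \<theta> :: "int \<Rightarrow> 'w \<Rightarrow> nat" and X :: "int \<Rightarrow> 'w \<Rightarrow> real" and i :: int
  assumes "ref_measure \<mu> D"
    and "densities \<mu> f"
    and "A1 \<mu> D f"
    and "A2 Q \<pi>"
    and "stationary_hmm M \<mu> Q \<pi> f \<theta> X"
    and "continuous_on UNIV (lr_cdf M f X)"
    and "strict_mono_on {0..} (lr_cdf M f X)"
  shows "continuous_on {0<..<1} (cond_mean_below M (ell_inf M \<theta> X i))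
    \<and> strict_mono_on {0<..<1} (cond_mean_below M (ell_inf M \<theta> X i))
    \<and> (\<forall>t\<in>{0<..<1}. cond_mean_below M (ell_inf M \<theta> X i) t < t)"
proof -
  have P: "prob_space M" using assms(5) unfolding stationary_hmm_def by blast
  have hm: "hmm M \<mu> D Q \<pi> f \<theta> X"
    unfolding hmm_def hmm_axioms_def using P assms by auto
  interpret H: hmm_i M \<mu> D Q \<pi> f \<theta> X i using hm by (simp add: hmm_i_def)
  have ae: "AE \<omega> in M. ell_inf M \<theta> X i \<omega> = H.Ls \<omega>" by (rule H.ell_eq)
  have Lm[measurable]: "ell_inf M \<theta> X i \<in> borel_measurable M"
    unfolding ell_inf_def by (rule borel_measurable_cond_exp2)
  have cm: "cond_mean_below M (ell_inf M \<theta> X i) = cond_mean_below M H.Ls"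
  proof
    fix t
    have m: "measure M {\<omega>\<in>space M. ell_inf M \<theta> X i \<omega> < t} = measure M {\<omega>\<in>space M. H.Ls \<omega> < t}"
      by (rule measure_eq_AE) (use ae in \<open>auto elim: eventually_mono\<close>, measurable)
    have n: "(\<integral>\<omega>. ell_inf M \<theta> X i \<omega> * indicator {\<omega>\<in>space M. ell_inf M \<theta> X i \<omega> < t} \<omega> \<partial>M)
        = (\<integral>\<omega>. H.Ls \<omega> * indicator {\<omega>\<in>space M. H.Ls \<omega> < t} \<omega> \<partial>M)"
      by (rule integral_cong_AE) (measurable, use ae in \<open>auto elim!: eventually_mono simp: indicator_def\<close>)
    show "cond_mean_below M (ell_inf M \<theta> X i) t = cond_mean_below M H.Ls t"
      unfolding cond_mean_below_def m n ..
  qed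
  show ?thesis unfolding cm
  proof (rule abstract_m[OF P H.Ls_meas])
    show "\<And>x. x \<in> space M \<Longrightarrow> 0 \<le> H.Ls x \<and> H.Ls x \<le> 1" by (rule H.Ls_01)
    show "\<And>t. t \<in> {0<..<1} \<Longrightarrow> measure M {x \<in> space M. H.Ls x = t} = 0" by (rule H.atom_Ls) auto
    show "\<And>a b. 0 < a \<Longrightarrow> a < b \<Longrightarrow> b < 1 \<Longrightarrow> 0 < measure M {x \<in> space M. a < H.Ls x \<and> H.Ls x < b}"
      by (rule H.pos_Ls)
  qed
qed

end
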